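(* Let $(G,\gamma,b)$ be a $4$-edge-connected RES-graph. Let $v\neq b$ be a vertex joined to $b$ by an edge $e$, and let $h$ be the half-edge of $e$ at $v$. Then for any basis $B$ of $M(G,\gamma,b)$, strictly more than half of the transitions at $v$ that contain $h$ work for $B$.
   Context: Graphs are finite and may have loops and multiple edges. Each edge consists of two half-edges; each half-edge is incident to a vertex, and a loop contributes $2$ to the degree of its vertex. An arc is an ordered pair $(h_1,h_2)$ of half-edges forming an edge; its tail is the vertex of $h_1$ and its head is the vertex of $h_2$. A trail is a sequence of arcs whose edges are pairwise distinct and such that the head of each arc (other than the last) is the tail of the next. Its tail and head are the tail of its first arc and the head of its last arc. A circuit is a trail whose head equals its tail. A circuit-decomposition is a collection of circuits using every edge exactly once. A graph is Eulerian if it is connected and every vertex has even degree. A signature is a function $\gamma:E(G)\to\mathbb{Z}_2$. The weight of a trail is the $\mathbb{Z}_2$-sum of $\gamma$ over its edges, and a trail is zero or non-zero accordingly. An RES-graph is a triple $(G,\gamma,b)$ where $G$ is Eulerian, $\gamma$ is a signature of $G$, and $b\in V(G)$. It is $4$-edge-connected if there is no set $Y\subseteq V(G)\setminus\{b\}$ with $|\delta(Y)|=2$, where $\delta(Y)$ is the set of edges with exactly one end in $Y$. A flooding is a circuit-decomposition of $G$ of size $\deg(b)/2$ in which every circuit has $b$ as its tail and head. A flooding is optimal if it has the maximum number of non-zero circuits among all floodings. For a zero circuit $C$ with tail and head $b$, a representative of $C$ is a pair $(f,\alpha)$ where $f$ is an arc of $C$ and $\alpha\in\{0,1\}$ is the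 weight of the initial subtrail of $C$ ending with $f$. A system of representatives for a flooding $\mathcal{C}$ is a set consisting of exactly one representative for each zero circuit of $\mathcal{C}$. The flooding matroid $M(G,\gamma,b)$ has as ground set all pairs $(f,\alpha)$ with $f$ an arc and $\alpha\in\{0,1\}$. Its bases are the systems of representatives of optimal floodings; the empty set is a basis if some optimal flooding has no zero circuit. A transition at $v$ is a set of two distinct half-edges both incident to $v$. The transitions of a trail $T$ are the sets $\{h_1,h_2\}$ such that $T$ has consecutive arcs of the form $(h_1',h_1),(h_2,h_2')$. The transitions of a flooding are the transitions of its circuits. A transition $R$ works for a basis $B$ if there is an optimal flooding that has $R$ as a transition and has $B$ as a system of representatives. *)

theory Defs
  imports Main
begin

text \<open>H is the finite set of half-edges, V the finite vertex set,
  vert h the vertex a half-edge is incident to, mate h the other half-edge of the same edge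
  (a fixed-point-free involution on H). Loops are edges whose
  two half-edges sit at the same vertex; parallel edges are distinct such sets.\<close>

type_synonym 'h arc = "'h \<times> 'h"

definition is_graph :: "'h set \<Rightarrow> 'v set \<Rightarrow> ('h \<Rightarrow> 'v) \<Rightarrow> ('h \<Rightarrow> 'h) \<Rightarrow> bool" where
  "is_graph H V vert mate \<longleftrightarrow> finite H \<and> finite V \<and>
     (\<forall>h\<in>H. vert h \<in> V \<and> mate h \<in> H \<and> mate h \<noteq> h \<and> mate (mate h) = h)"

definition edges :: "'h set \<Rightarrow> ('h \<Rightarrow> 'h) \<Rightarrow> 'h set set" where
  "edges H mate = (\<lambda>h. {h, mate h}) ` H"

definition deg :: "'h set \<Rightarrow> ('h \<Rightarrow> 'v) \<Rightarrow> 'v \<Rightarrow> nat" where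
  "deg H vert v = card {h\<in>H. vert h = v}"

definition adj :: "'h set \<Rightarrow> ('h \<Rightarrow> 'v) \<Rightarrow> ('h \<Rightarrow> 'h) \<Rightarrow> ('v \<times> 'v) set" where
  "adj H vert mate = {(vert h, vert (mate h)) | h. h \<in> H}"

definition connected_graph :: "'h set \<Rightarrow> 'v set \<Rightarrow> ('h \<Rightarrow> 'v) \<Rightarrow> ('h \<Rightarrow> 'h) \<Rightarrow> bool" where
  "connected_graph H V vert mate \<longleftrightarrow> V \<noteq> {} \<and>
     (\<forall>u\<in>V. \<forall>w\<in>V. (u, w) \<in> (adj H vert mate)\<^sup>*)"

definition eulerian :: "'h set \<Rightarrow> 'v set \<Rightarrow> ('h \<Rightarrow> 'v) \<Rightarrow> ('h \<Rightarrow> 'h) \<Rightarrow> bool" where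
  "eulerian H V vert mate \<longleftrightarrow> is_graph H V vert mate \<and> connected_graph H V vert mate \<and>
     (\<forall>v\<in>V. even (deg H vert v))"

text \<open>A signature is a map from edges to Z_2, encoded as bool (True = 1).
  An RES-graph is (G, gamma, b) with G Eulerian and b a vertex.\<close>

definition res_graph :: "'h set \<Rightarrow> 'v set \<Rightarrow> ('h \<Rightarrow> 'v) \<Rightarrow> ('h \<Rightarrow> 'h) \<Rightarrow> 'v \<Rightarrow> bool" where
  "res_graph H V vert mate b \<longleftrightarrow> eulerian H V vert mate \<and> b \<in> V"

definition cut :: "'h set \<Rightarrow> ('h \<Rightarrow> 'v) \<Rightarrow> ('h \<Rightarrow> 'h) \<Rightarrow> 'v set \<Rightarrow> 'h set set" where
  "cut H vert mate Y = {{h, mate h} | h. h \<in> H \<and> vert h \<in> Y \<and> vert (mate h) \<notin> Y}"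

definition four_edge_connected :: "'h set \<Rightarrow> 'v set \<Rightarrow> ('h \<Rightarrow> 'v) \<Rightarrow> ('h \<Rightarrow> 'h) \<Rightarrow> 'v \<Rightarrow> bool" where
  "four_edge_connected H V vert mate b \<longleftrightarrow>
     \<not> (\<exists>Y. Y \<subseteq> V - {b} \<and> card (cut H vert mate Y) = 2)"

definition is_arc :: "'h set \<Rightarrow> ('h \<Rightarrow> 'h) \<Rightarrow> 'h arc \<Rightarrow> bool" where
  "is_arc H mate a \<longleftrightarrow> fst a \<in> H \<and> snd a = mate (fst a)"

definition arc_edge :: "'h arc \<Rightarrow> 'h set" where
  "arc_edge a = {fst a, snd a}"

definition is_trail :: "'h set \<Rightarrow> ('h \<Rightarrow> 'v) \<Rightarrow> ('h \<Rightarrow> 'h) \<Rightarrow> 'h arc list \<Rightarrow> bool" where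
  "is_trail H vert mate T \<longleftrightarrow> T \<noteq> [] \<and> (\<forall>a\<in>set T. is_arc H mate a) \<and>
     distinct (map arc_edge T) \<and>
     (\<forall>i. Suc i < length T \<longrightarrow> vert (snd (T ! i)) = vert (fst (T ! Suc i)))"

definition weight :: "('h set \<Rightarrow> bool) \<Rightarrow> 'h arc list \<Rightarrow> nat" where
  "weight \<gamma> T = (if odd (card {e \<in> set (map arc_edge T). \<gamma> e}) then 1 else 0)"

definition circuit_at :: "'h set \<Rightarrow> ('h \<Rightarrow> 'v) \<Rightarrow> ('h \<Rightarrow> 'h) \<Rightarrow> 'v \<Rightarrow> 'h arc list \<Rightarrow> bool" where
  "circuit_at H vert mate b T \<longleftrightarrow> is_trail H vert mate T \<and>
     vert (fst (hd T)) = b \<and> vert (snd (last T)) = b"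

definition flooding :: "'h set \<Rightarrow> ('h \<Rightarrow> 'v) \<Rightarrow> ('h \<Rightarrow> 'h) \<Rightarrow> 'v \<Rightarrow> 'h arc list set \<Rightarrow> bool" where
  "flooding H vert mate b C \<longleftrightarrow> finite C \<and>
     (\<forall>T\<in>C. circuit_at H vert mate b T) \<and>
     (\<forall>e\<in>edges H mate. \<exists>!T. T \<in> C \<and> e \<in> set (map arc_edge T)) \<and>
     card C = deg H vert b div 2"

definition nonzero_count :: "('h set \<Rightarrow> bool) \<Rightarrow> 'h arc list set \<Rightarrow> nat" where
  "nonzero_count \<gamma> C = card {T \<in> C. weight \<gamma> T = 1}"

definition optimal_flooding ::
  "'h set \<Rightarrow> ('h \<Rightarrow> 'v) \<Rightarrow> ('h \<Rightarrow> 'h) \<Rightarrow> ('h set \<Rightarrow> bool) \<Rightarrow> 'v \<Rightarrow> 'h arc list set \<Rightarrow> bool" where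
  "optimal_flooding H vert mate \<gamma> b C \<longleftrightarrow> flooding H vert mate b C \<and>
     (\<forall>C'. flooding H vert mate b C' \<longrightarrow> nonzero_count \<gamma> C' \<le> nonzero_count \<gamma> C)"

definition is_rep :: "('h set \<Rightarrow> bool) \<Rightarrow> 'h arc list \<Rightarrow> 'h arc \<times> nat \<Rightarrow> bool" where
  "is_rep \<gamma> T p \<longleftrightarrow> (\<exists>i<length T. fst p = T ! i \<and> snd p = weight \<gamma> (take (Suc i) T))"

definition sys_reps :: "('h set \<Rightarrow> bool) \<Rightarrow> 'h arc list set \<Rightarrow> ('h arc \<times> nat) set \<Rightarrow> bool" where
  "sys_reps \<gamma> C S \<longleftrightarrow> (\<exists>g. (\<forall>T\<in>C. weight \<gamma> T = 0 \<longrightarrow> is_rep \<gamma> T (g T)) \<and>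
       inj_on g {T \<in> C. weight \<gamma> T = 0} \<and>
       S = g ` {T \<in> C. weight \<gamma> T = 0})"

definition flooding_basis ::
  "'h set \<Rightarrow> ('h \<Rightarrow> 'v) \<Rightarrow> ('h \<Rightarrow> 'h) \<Rightarrow> ('h set \<Rightarrow> bool) \<Rightarrow> 'v \<Rightarrow> ('h arc \<times> nat) set \<Rightarrow> bool" where
  "flooding_basis H vert mate \<gamma> b B \<longleftrightarrow>
     (\<exists>C. optimal_flooding H vert mate \<gamma> b C \<and> sys_reps \<gamma> C B)"

definition trail_transitions :: "'h arc list \<Rightarrow> 'h set set" where
  "trail_transitions T = {{snd (T ! i), fst (T ! Suc i)} | i. Suc i < length T}"

definition flooding_transitions :: "'h arc list set \<Rightarrow> 'h set set" where
  "flooding_transitions C = (\<Union>T\<in>C. trail_transitions T)"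

definition works_for ::
  "'h set \<Rightarrow> ('h \<Rightarrow> 'v) \<Rightarrow> ('h \<Rightarrow> 'h) \<Rightarrow> ('h set \<Rightarrow> bool) \<Rightarrow> 'v \<Rightarrow> 'h set \<Rightarrow> ('h arc \<times> nat) set \<Rightarrow> bool" where
  "works_for H vert mate \<gamma> b R B \<longleftrightarrow>
     (\<exists>C. optimal_flooding H vert mate \<gamma> b C \<and> R \<in> flooding_transitions C \<and> sys_reps \<gamma> C B)"

definition transitions_at_with :: "'h set \<Rightarrow> ('h \<Rightarrow> 'v) \<Rightarrow> 'v \<Rightarrow> 'h \<Rightarrow> 'h set set" where
  "transitions_at_with H vert v h =
     {R. \<exists>h1 h2. R = {h1, h2} \<and> h1 \<noteq> h2 \<and> h1 \<in> H \<and> h2 \<in> H \<and> vert h1 = v \<and> vert h2 = v \<and> h \<in> R}"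

end

theory Submission
  imports Defs
begin

definition revT :: "'h arc list \<Rightarrow> 'h arc list" where
  "revT T = rev (map prod.swap T)"

definition es :: "'h arc list \<Rightarrow> 'h set set" where
  "es T = set (map arc_edge T)"

definition gc :: "('h set \<Rightarrow> bool) \<Rightarrow> 'h arc list \<Rightarrow> nat" where
  "gc \<gamma> T = length (filter (\<lambda>a. \<gamma> (arc_edge a)) T)"

lemma gc_append[simp]: "gc \<gamma> (A @ B) = gc \<gamma> A + gc \<gamma> B"
  by (simp add: gc_def)
lemma gc_Cons[simp]: "gc \<gamma> (a # B) = (if \<gamma> (arc_edge a) then 1 else 0) + gc \<gamma> B"
  by (simp add: gc_def)
lemma gc_Nil[simp]: "gc \<gamma> [] = 0" by (simp add: gc_def)

lemma arc_edge_swap[simp]: "arc_edge (prod.swap a) = arc_edge a"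
  by (cases a) (auto simp: arc_edge_def)

lemma gc_revT[simp]: "gc \<gamma> (revT T) = gc \<gamma> T"
  by (simp add: gc_def revT_def filter_map comp_def rev_filter[symmetric])

lemma es_append[simp]: "es (A @ B) = es A \<union> es B" by (simp add: es_def)
lemma es_revT[simp]: "es (revT T) = es T" by (simp add: es_def revT_def image_image)
lemma map_edge_revT: "map arc_edge (revT T) = rev (map arc_edge T)"
  by (simp add: revT_def rev_map[symmetric] comp_def)

lemma weight_gc:
  assumes "distinct (map arc_edge T)"
  shows "weight \<gamma> T = (if odd (gc \<gamma> T) then 1 else 0)"
proof -
  have "card {e \<in> set (map arc_edge T). \<gamma> e} = length (filter \<gamma> (map arc_edge T))"
    using assms by (metis distinct_card distinct_filter set_filter)
  then show ?thesis by (simp add: weight_def gc_def filter_map comp_def)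
qed

lemma revT_append[simp]: "revT (A @ B) = revT B @ revT A" by (simp add: revT_def)
lemma revT_revT[simp]: "revT (revT A) = A" by (simp add: revT_def rev_map comp_def)
lemma revT_Nil_iff[simp]: "revT A = [] \<longleftrightarrow> A = []" by (simp add: revT_def)
lemma length_revT[simp]: "length (revT A) = length A" by (simp add: revT_def)
lemma set_revT: "set (revT A) = prod.swap ` set A" by (simp add: revT_def)
lemma hd_revT: "A \<noteq> [] \<Longrightarrow> hd (revT A) = prod.swap (last A)"
  by (simp add: revT_def hd_rev last_map)
lemma last_revT: "A \<noteq> [] \<Longrightarrow> last (revT A) = prod.swap (hd A)"
  by (simp add: revT_def last_rev hd_map)

lemma is_rep_iff:
  "is_rep \<gamma> T (f, \<alpha>) \<longleftrightarrow> (\<exists>xs ys. T = xs @ f # ys \<and> \<alpha> = weight \<gamma> (xs @ [f]))"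
proof
  assume "is_rep \<gamma> T (f, \<alpha>)"
  then obtain i where i: "i < length T" "f = T ! i" "\<alpha> = weight \<gamma> (take (Suc i) T)"
    by (auto simp: is_rep_def)
  then have "T = take i T @ f # drop (Suc i) T" by (simp add: id_take_nth_drop)
  moreover have "take (Suc i) T = take i T @ [f]" using i by (simp add: take_Suc_conv_app_nth)
  ultimately show "\<exists>xs ys. T = xs @ f # ys \<and> \<alpha> = weight \<gamma> (xs @ [f])" using i by metis
next
  assume "\<exists>xs ys. T = xs @ f # ys \<and> \<alpha> = weight \<gamma> (xs @ [f])"
  then obtain xs ys where "T = xs @ f # ys" "\<alpha> = weight \<gamma> (xs @ [f])" by blast
  then show "is_rep \<gamma> T (f, \<alpha>)" unfolding is_rep_def
    by (intro exI[of _ "length xs"]) (simp add: nth_append take_Suc_conv_app_nth)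
qed

lemma rep_move:
  assumes "distinct (map arc_edge (A0 @ f # B0))" "distinct (map arc_edge (A1 @ f # B1))"
    and "odd (gc \<gamma> A0) = odd (gc \<gamma> A1)"
  shows "is_rep \<gamma> (A1 @ f # B1) (f, weight \<gamma> (A0 @ [f]))"
proof -
  have "weight \<gamma> (A0 @ [f]) = weight \<gamma> (A1 @ [f])"
    using assms by (simp add: weight_gc)
  then show ?thesis unfolding is_rep_iff by blast
qed

lemma is_trail_alt:
  "is_trail H vert mate T \<longleftrightarrow> T \<noteq> [] \<and> (\<forall>a\<in>set T. is_arc H mate a) \<and> distinct (map arc_edge T)
     \<and> successively (\<lambda>a c. vert (snd a) = vert (fst c)) T"
  by (simp add: is_trail_def successively_conv_nth)

lemma es_disj_distinct:
  "distinct (map arc_edge (A @ B)) \<longleftrightarrow> distinct (map arc_edge A) \<and> distinct (map arc_edge B) \<and> es A \<inter> es B = {}"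
  by (simp add: es_def)

lemma trail_append:
  assumes "is_trail H vert mate A" "is_trail H vert mate B"
    "vert (snd (last A)) = vert (fst (hd B))" "es A \<inter> es B = {}"
  shows "is_trail H vert mate (A @ B)"
proof -
  have "successively (\<lambda>a c. vert (snd a) = vert (fst c)) (A @ B)"
    using assms unfolding is_trail_alt successively_append_iff by blast
  then show ?thesis using assms unfolding is_trail_alt es_disj_distinct by auto
qed

lemma trail_appendD:
  assumes "is_trail H vert mate (A @ B)" "A \<noteq> []" "B \<noteq> []"
  shows "is_trail H vert mate A \<and> is_trail H vert mate B \<and>
    vert (snd (last A)) = vert (fst (hd B)) \<and> es A \<inter> es B = {}"
  using assms unfolding is_trail_alt es_disj_distinct successively_append_iff by simp

lemma trail_distinct: "is_trail H vert mate T \<Longrightarrow> distinct (map arc_edge T)"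
  by (simp add: is_trail_def)

lemma trail_ne: "is_trail H vert mate T \<Longrightarrow> T \<noteq> []"
  by (simp add: is_trail_def)

lemma trail_arc: "is_trail H vert mate T \<Longrightarrow> a \<in> set T \<Longrightarrow> is_arc H mate a"
  by (simp add: is_trail_def)

lemma trail_consec: "is_trail H vert mate T \<Longrightarrow> Suc i < length T \<Longrightarrow> vert (snd (T ! i)) = vert (fst (T ! Suc i))"
  by (simp add: is_trail_def)

lemma trail_transitions_append:
  assumes "A \<noteq> []" "B \<noteq> []"
  shows "{snd (last A), fst (hd B)} \<in> trail_transitions (A @ B)"
proof -
  have "Suc (length A - 1) < length (A @ B)" using assms by (cases B) auto
  moreover have "(A @ B) ! (length A - 1) = last A" using assms by (simp add: nth_append last_conv_nth)
  moreover have "(A @ B) ! Suc (length A - 1) = hd B" using assms by (simp add: nth_append hd_conv_nth)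
  ultimately show ?thesis unfolding trail_transitions_def
    by (intro CollectI exI[of _ "length A - 1"]) simp
qed

lemma trail_transitions_mono_left: "trail_transitions B \<subseteq> trail_transitions (A @ B)"
proof
  fix R assume "R \<in> trail_transitions B"
  then obtain i where "R = {snd (B ! i), fst (B ! Suc i)}" "Suc i < length B"
    by (auto simp: trail_transitions_def)
  then show "R \<in> trail_transitions (A @ B)" unfolding trail_transitions_def
    by (intro CollectI exI[of _ "length A + i"]) (simp add: nth_append)
qed

lemma trail_transitions_mono_right: "trail_transitions A \<subseteq> trail_transitions (A @ B)"
proof
  fix R assume "R \<in> trail_transitions A"
  then obtain i where "R = {snd (A ! i), fst (A ! Suc i)}" "Suc i < length A"
    by (auto simp: trail_transitions_def)
  then show "R \<in> trail_transitions (A @ B)" unfolding trail_transitions_def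
    by (intro CollectI exI[of _ i]) (simp add: nth_append)
qed

lemma trail_transitions_revT_sub: "trail_transitions (revT A) \<subseteq> trail_transitions A"
proof
  fix R assume "R \<in> trail_transitions (revT A)"
  then obtain i where R: "R = {snd (revT A ! i), fst (revT A ! Suc i)}" "Suc i < length A"
    by (auto simp: trail_transitions_def)
  define n where "n = length A"
  have 1: "revT A ! i = prod.swap (A ! (n - Suc i))" using R(2)
    by (simp add: revT_def rev_nth n_def)
  have 2: "revT A ! Suc i = prod.swap (A ! (n - Suc (Suc i)))" using R(2)
    by (simp add: revT_def rev_nth n_def)
  have 3: "n - Suc i = Suc (n - Suc (Suc i))" using R(2) n_def by simp
  have "R = {snd (A ! (n - Suc (Suc i))), fst (A ! Suc (n - Suc (Suc i)))}"
    using R(1) 1 2 3 by (auto simp: prod.swap_def)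
  moreover have "Suc (n - Suc (Suc i)) < length A" using R(2) n_def by simp
  ultimately show "R \<in> trail_transitions A" unfolding trail_transitions_def
    by (intro CollectI exI[of _ "n - Suc (Suc i)"]) simp
qed

lemma trail_transitions_revT[simp]: "trail_transitions (revT A) = trail_transitions A"
  using trail_transitions_revT_sub[of A] trail_transitions_revT_sub[of "revT A"] by simp

locale rg =
  fixes H :: "'h set" and V :: "'v set" and vert :: "'h \<Rightarrow> 'v" and mate :: "'h \<Rightarrow> 'h"
  assumes graph: "is_graph H V vert mate"
begin

lemma mate_in: "x \<in> H \<Longrightarrow> mate x \<in> H" using graph by (simp add: is_graph_def)
lemma mate_mate[simp]: "x \<in> H \<Longrightarrow> mate (mate x) = x" using graph by (simp add: is_graph_def)
lemma mate_neq: "x \<in> H \<Longrightarrow> mate x \<noteq> x" using graph by (simp add: is_graph_def)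
lemma vert_in: "x \<in> H \<Longrightarrow> vert x \<in> V" using graph by (simp add: is_graph_def)
lemma finH: "finite H" using graph by (simp add: is_graph_def)

lemma arc_edge_eq: "is_arc H mate a \<Longrightarrow> x \<in> arc_edge a \<Longrightarrow> arc_edge a = {x, mate x}"
  by (auto simp: is_arc_def arc_edge_def mate_mate)

lemma arc_fst_snd: "is_arc H mate a \<Longrightarrow> fst a \<noteq> snd a"
  using mate_neq[of "fst a"] by (auto simp: is_arc_def)

lemma arc_snd_in: "is_arc H mate a \<Longrightarrow> snd a \<in> H"
  using mate_in by (auto simp: is_arc_def)

lemma arc_swap: "is_arc H mate a \<Longrightarrow> is_arc H mate (prod.swap a)"
  by (cases a) (auto simp: is_arc_def mate_in)

lemma trail_revT:
  assumes "is_trail H vert mate A"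
  shows "is_trail H vert mate (revT A)"
proof -
  have "successively (\<lambda>a c. vert (snd a) = vert (fst c)) (revT A)"
    using assms unfolding is_trail_alt revT_def successively_rev successively_map
    by (auto elim!: successively_mono)
  then show ?thesis using assms unfolding is_trail_alt
    by (auto simp: map_edge_revT set_revT arc_swap)
qed

lemma circuit_revT:
  "circuit_at H vert mate b A \<Longrightarrow> circuit_at H vert mate b (revT A)"
  using trail_revT by (auto simp: circuit_at_def hd_revT last_revT trail_ne)

end

lemma hd_append_ne: "A \<noteq> [] \<Longrightarrow> hd (A @ B) = hd A" by simp
lemma last_append_ne: "B \<noteq> [] \<Longrightarrow> last (A @ B) = last B" by simp

context rg begin

lemma trail_pos:
  assumes "is_trail H vert mate T" "i < length T" "j < length T"
    "x \<in> arc_edge (T ! i)" "x \<in> arc_edge (T ! j)"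
  shows "i = j"
proof -
  have "is_arc H mate (T ! i)" "is_arc H mate (T ! j)" using assms trail_arc nth_mem by blast+
  then have "arc_edge (T ! i) = arc_edge (T ! j)" using assms arc_edge_eq by metis
  then have "map arc_edge T ! i = map arc_edge T ! j" using assms by simp
  then show ?thesis using assms trail_distinct nth_eq_iff_index_eq by (metis length_map)
qed

lemma in_arc_edge_fst: "fst a \<in> arc_edge a" by (simp add: arc_edge_def)
lemma in_arc_edge_snd: "snd a \<in> arc_edge a" by (simp add: arc_edge_def)

lemma arc_edge_in_edges: "is_arc H mate a \<Longrightarrow> arc_edge a \<in> edges H mate"
  by (auto simp: is_arc_def arc_edge_def edges_def)

end

definition jn :: "'h arc list \<Rightarrow> nat \<Rightarrow> 'h set" where
  "jn T i = {snd (T ! i), fst (T ! Suc i)}"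

locale fl = rg H V vert mate for H :: "'h set" and V :: "'v set" and vert mate +
  fixes b :: 'v and C :: "'h arc list set"
  assumes flood: "flooding H vert mate b C"
begin

lemma finC: "finite C" using flood by (simp add: flooding_def)
lemma circ: "T \<in> C \<Longrightarrow> circuit_at H vert mate b T" using flood by (simp add: flooding_def)
lemma trl: "T \<in> C \<Longrightarrow> is_trail H vert mate T" using circ by (simp add: circuit_at_def)
lemma cardC: "card C = deg H vert b div 2" using flood by (simp add: flooding_def)
lemma hd_b: "T \<in> C \<Longrightarrow> vert (fst (hd T)) = b" using circ by (simp add: circuit_at_def)
lemma last_b: "T \<in> C \<Longrightarrow> vert (snd (last T)) = b" using circ by (simp add: circuit_at_def)
lemma ne: "T \<in> C \<Longrightarrow> T \<noteq> []" using trl trail_ne by blast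

lemma es_sub: "T \<in> C \<Longrightarrow> es T \<subseteq> edges H mate"
proof
  fix e assume T: "T \<in> C" and "e \<in> es T"
  then obtain a where a: "a \<in> set T" "e = arc_edge a" by (auto simp: es_def)
  show "e \<in> edges H mate" using arc_edge_in_edges[OF trail_arc[OF trl[OF T] a(1)]] a by simp
qed

lemma cover: "e \<in> edges H mate \<Longrightarrow> \<exists>T\<in>C. e \<in> es T"
proof -
  assume "e \<in> edges H mate"
  then have "\<exists>!T. T \<in> C \<and> e \<in> set (map arc_edge T)" using flood by (simp add: flooding_def)
  then obtain T where "T \<in> C" "e \<in> set (map arc_edge T)" by blast
  then show ?thesis unfolding es_def by blast
qed

lemma uniq: "T \<in> C \<Longrightarrow> T' \<in> C \<Longrightarrow> e \<in> es T \<Longrightarrow> e \<in> es T' \<Longrightarrow> T = T'"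
proof -
  assume a: "T \<in> C" "T' \<in> C" "e \<in> es T" "e \<in> es T'"
  then have "e \<in> edges H mate" using es_sub by blast
  then have "\<exists>!T. T \<in> C \<and> e \<in> set (map arc_edge T)" using flood by (simp add: flooding_def)
  then show "T = T'" using a by (auto simp: es_def)
qed

lemma half_cover: "x \<in> H \<Longrightarrow> \<exists>T\<in>C. \<exists>i<length T. x = fst (T ! i) \<or> x = snd (T ! i)"
proof -
  assume x: "x \<in> H"
  then have "{x, mate x} \<in> edges H mate" by (auto simp: edges_def)
  then obtain T where T: "T \<in> C" "{x, mate x} \<in> es T" using cover by blast
  then obtain i where i: "i < length T" "arc_edge (T ! i) = {x, mate x}"
    by (auto simp: es_def in_set_conv_nth)
  then have "x \<in> arc_edge (T ! i)" by simp
  then show ?thesis using T i by (auto simp: arc_edge_def)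
qed

lemma pos_uniq:
  assumes "T \<in> C" "T' \<in> C" "i < length T" "j < length T'"
    "x \<in> arc_edge (T ! i)" "x \<in> arc_edge (T' ! j)"
  shows "T = T' \<and> i = j"
proof -
  have ar: "is_arc H mate (T ! i)" "is_arc H mate (T' ! j)" using assms trl trail_arc nth_mem by blast+
  then have "arc_edge (T ! i) = arc_edge (T' ! j)" using assms arc_edge_eq by metis
  moreover have "arc_edge (T ! i) \<in> es T" "arc_edge (T' ! j) \<in> es T'" using assms by (auto simp: es_def)
  ultimately have "T = T'" using uniq assms by metis
  moreover have "i = j" using trail_pos[OF trl[OF assms(1)] assms(3), of j x] assms(4,5,6) \<open>T = T'\<close> by simp
  ultimately show ?thesis by simp
qed

lemma arc_in: "T \<in> C \<Longrightarrow> a \<in> set T \<Longrightarrow> is_arc H mate a"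
  by (rule trail_arc[OF trl])

lemma arcH: "T \<in> C \<Longrightarrow> a \<in> set T \<Longrightarrow> fst a \<in> H \<and> snd a \<in> H"
  using arc_in[of T a] arc_snd_in[of a] by (simp add: is_arc_def)

lemma internal_not_b:
  assumes ev: "even (deg H vert b)" and T1: "T1 \<in> C" and i: "Suc i < length T1"
  shows "vert (snd (T1 ! i)) \<noteq> b"
proof
  assume bad: "vert (snd (T1 ! i)) = b"
  define hb where "hb T = {x. \<exists>a\<in>set T. x \<in> arc_edge a \<and> vert x = b}" for T
  have hbI: "x \<in> hb T" if "a \<in> set T" "x \<in> arc_edge a" "vert x = b" for x a T
    using that unfolding hb_def by blast
  have fin: "finite (hb T)" for T
  proof -
    have "hb T \<subseteq> \<Union> (arc_edge ` set T)" by (auto simp: hb_def)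
    moreover have "finite (\<Union> (arc_edge ` set T))" by (simp add: arc_edge_def)
    ultimately show ?thesis by (rule finite_subset)
  qed
  have Hb: "{x \<in> H. vert x = b} = \<Union> (hb ` C)"
  proof
    show "{x \<in> H. vert x = b} \<subseteq> \<Union> (hb ` C)"
    proof
      fix x assume "x \<in> {x \<in> H. vert x = b}"
      then obtain T i where "T \<in> C" "i < length T" "x = fst (T ! i) \<or> x = snd (T ! i)" "vert x = b"
        using half_cover by blast
      then have "x \<in> hb T" "T \<in> C" unfolding hb_def using nth_mem by (auto simp: arc_edge_def)
      then show "x \<in> \<Union> (hb ` C)" by blast
    qed
    show "\<Union> (hb ` C) \<subseteq> {x \<in> H. vert x = b}"
      using arcH by (auto simp: hb_def arc_edge_def)
  qed
  have disj: "\<forall>T\<in>C. \<forall>T'\<in>C. T \<noteq> T' \<longrightarrow> hb T \<inter> hb T' = {}"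
  proof (intro ballI impI)
    fix T T' assume a: "T \<in> C" "T' \<in> C" "T \<noteq> T'"
    show "hb T \<inter> hb T' = {}"
    proof (rule ccontr)
      assume "hb T \<inter> hb T' \<noteq> {}"
      then obtain x c c' where "c \<in> set T" "c' \<in> set T'" "x \<in> arc_edge c" "x \<in> arc_edge c'"
        by (auto simp: hb_def)
      then obtain i j where "i < length T" "j < length T'" "x \<in> arc_edge (T ! i)" "x \<in> arc_edge (T' ! j)"
        by (metis in_set_conv_nth)
      then show False using pos_uniq a by blast
    qed
  qed
  have two: "card (hb T) \<ge> 2 + (if T = T1 then 1 else 0)" if T: "T \<in> C" for T
  proof -
    have tr: "is_trail H vert mate T" using T trl by blast
    define n where "n = length T"
    have n: "n > 0" using ne T n_def by simp
    have hd0: "hd T = T ! 0" using ne[OF T] by (simp add: hd_conv_nth)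
    have ls: "last T = T ! (n - 1)" using ne[OF T] n_def by (simp add: last_conv_nth)
    have m0: "T ! 0 \<in> set T" using n n_def by simp
    have m1: "T ! (n - 1) \<in> set T" using n n_def by simp
    have x1: "fst (T ! 0) \<in> hb T" using hd_b[OF T] hd0 by (intro hbI[OF m0 in_arc_edge_fst]) simp
    have x2: "snd (T ! (n - 1)) \<in> hb T" using last_b[OF T] ls by (intro hbI[OF m1 in_arc_edge_snd]) simp
    have d12: "fst (T ! 0) \<noteq> snd (T ! (n - 1))"
    proof
      assume e: "fst (T ! 0) = snd (T ! (n - 1))"
      show False
      proof (cases "n - 1 = 0")
        case True then show ?thesis using e arc_fst_snd[OF trail_arc[OF tr m0]] by simp
      next
        case False
        have "0 = n - 1"
        proof (rule trail_pos[OF tr])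
          show "0 < length T" "n - 1 < length T" using n n_def by auto
          show "fst (T ! 0) \<in> arc_edge (T ! 0)" by (rule in_arc_edge_fst)
          show "fst (T ! 0) \<in> arc_edge (T ! (n - 1))" unfolding e by (rule in_arc_edge_snd)
        qed
        then show ?thesis using False by simp
      qed
    qed
    show ?thesis
    proof (cases "T = T1")
      case False
      have "{fst (T ! 0), snd (T ! (n - 1))} \<subseteq> hb T" using x1 x2 by blast
      then have "card {fst (T ! 0), snd (T ! (n - 1))} \<le> card (hb T)" using fin card_mono by blast
      then show ?thesis using d12 False by simp
    next
      case True
      have ni: "Suc i < n" using i True n_def by simp
      have m2: "T ! i \<in> set T" using ni n_def by simp
      have x3: "snd (T ! i) \<in> hb T" using True bad by (intro hbI[OF m2 in_arc_edge_snd]) simp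
      have d13: "snd (T ! i) \<noteq> fst (T ! 0)"
      proof
        assume e: "snd (T ! i) = fst (T ! 0)"
        show False
        proof (cases "i = 0")
          case True then show ?thesis using e arc_fst_snd[OF trail_arc[OF tr m0]] by simp
        next
          case False
          have "i = 0"
          proof (rule trail_pos[OF tr])
            show "i < length T" "0 < length T" using n ni n_def by auto
            show "snd (T ! i) \<in> arc_edge (T ! i)" by (rule in_arc_edge_snd)
            show "snd (T ! i) \<in> arc_edge (T ! 0)" unfolding e by (rule in_arc_edge_fst)
          qed
          then show ?thesis using False by simp
        qed
      qed
      have d23: "snd (T ! i) \<noteq> snd (T ! (n - 1))"
      proof
        assume e: "snd (T ! i) = snd (T ! (n - 1))"
        have "i = n - 1"
        proof (rule trail_pos[OF tr])
          show "i < length T" "n - 1 < length T" using n ni n_def by auto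
          show "snd (T ! i) \<in> arc_edge (T ! i)" by (rule in_arc_edge_snd)
          show "snd (T ! i) \<in> arc_edge (T ! (n - 1))" unfolding e by (rule in_arc_edge_snd)
        qed
        then show False using ni by simp
      qed
      have "{fst (T ! 0), snd (T ! (n - 1)), snd (T ! i)} \<subseteq> hb T" using x1 x2 x3 by blast
      then have "card {fst (T ! 0), snd (T ! (n - 1)), snd (T ! i)} \<le> card (hb T)" using fin card_mono by blast
      then show ?thesis using d12 d13 d23 True by simp
    qed
  qed
  have "deg H vert b = card (\<Union> (hb ` C))" using Hb by (simp add: deg_def)
  also have "\<dots> = (\<Sum>T\<in>C. card (hb T))"
    using finC fin disj by (simp add: card_UN_disjoint)
  also have "\<dots> \<ge> (\<Sum>T\<in>C. 2 + (if T = T1 then 1 else 0))"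
    using two by (intro sum_mono) auto
  finally have "deg H vert b \<ge> (\<Sum>T\<in>C. 2 + (if T = T1 then 1 else (0::nat)))" .
  moreover have "(\<Sum>T\<in>C. 2 + (if T = T1 then 1 else (0::nat))) = (\<Sum>T\<in>C. 2) + (\<Sum>T\<in>C. if T = T1 then 1 else (0::nat))"
    by (rule sum.distrib)
  moreover have "(\<Sum>T\<in>C. if T = T1 then 1 else (0::nat)) = 1" using finC T1 by simp
  moreover have "(\<Sum>T\<in>C. (2::nat)) = 2 * card C" by simp
  ultimately show False using cardC ev by simp
qed

end

lemma weight01: "weight \<gamma> T = 0 \<or> weight \<gamma> T = 1"
  by (simp add: weight_def)

lemma nz1: "nonzero_count \<gamma> {x} = weight \<gamma> x"
proof (cases "weight \<gamma> x = 1")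
  case True
  then have "{T \<in> {x}. weight \<gamma> T = 1} = {x}" by auto
  then show ?thesis using True by (simp add: nonzero_count_def)
next
  case False
  then have "{T \<in> {x}. weight \<gamma> T = 1} = {}" by auto
  then show ?thesis using False weight01[of \<gamma> x] by (simp add: nonzero_count_def)
qed

lemma nz2: assumes "x \<noteq> y" shows "nonzero_count \<gamma> {x, y} = weight \<gamma> x + weight \<gamma> y"
proof -
  have "{T \<in> {x, y}. weight \<gamma> T = 1} = {T \<in> {x}. weight \<gamma> T = 1} \<union> {T \<in> {y}. weight \<gamma> T = 1}" by auto
  moreover have "card ({T \<in> {x}. weight \<gamma> T = 1} \<union> {T \<in> {y}. weight \<gamma> T = 1}) =
      card {T \<in> {x}. weight \<gamma> T = 1} + card {T \<in> {y}. weight \<gamma> T = 1}"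
    by (rule card_Un_disjoint) (use assms in auto)
  ultimately have "nonzero_count \<gamma> {x, y} = nonzero_count \<gamma> {x} + nonzero_count \<gamma> {y}"
    unfolding nonzero_count_def by simp
  then show ?thesis by (simp add: nz1)
qed

context fl begin

lemma es_ne: "circuit_at H vert mate b N \<Longrightarrow> es N \<noteq> {}"
  by (auto simp: circuit_at_def is_trail_def es_def)

lemma replace_disj:
  assumes "D \<subseteq> C" "\<forall>N\<in>D'. circuit_at H vert mate b N"
    "(\<Union>N\<in>D'. es N) = (\<Union>T\<in>D. es T)"
  shows "(C - D) \<inter> D' = {}"
proof (rule ccontr)
  assume "(C - D) \<inter> D' \<noteq> {}"
  then obtain N where N: "N \<in> C" "N \<notin> D" "N \<in> D'" by blast
  then obtain e where e: "e \<in> es N" using es_ne assms(2) by blast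
  then obtain T where "T \<in> D" "e \<in> es T" using assms(3) N by blast
  then have "T = N" using uniq assms(1) N e by blast
  then show False using N \<open>T \<in> D\<close> by simp
qed

lemma replace_flooding:
  assumes D: "D \<subseteq> C" and finD': "finite D'" and circ': "\<forall>N\<in>D'. circuit_at H vert mate b N"
    and U: "(\<Union>N\<in>D'. es N) = (\<Union>T\<in>D. es T)"
    and dj: "\<forall>N\<in>D'. \<forall>N'\<in>D'. N \<noteq> N' \<longrightarrow> es N \<inter> es N' = {}"
    and cd: "card D' = card D"
  shows "flooding H vert mate b ((C - D) \<union> D')"
proof -
  have disj: "(C - D) \<inter> D' = {}" using replace_disj D circ' U by blast
  have fin: "finite ((C - D) \<union> D')" using finC finD' by simp
  have ci: "\<forall>T\<in>(C - D) \<union> D'. circuit_at H vert mate b T" using circ circ' by blast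
  have un: "\<exists>!T. T \<in> (C - D) \<union> D' \<and> e \<in> set (map arc_edge T)" if e: "e \<in> edges H mate" for e
  proof (cases "e \<in> (\<Union>T\<in>D. es T)")
    case True
    then obtain N where N: "N \<in> D'" "e \<in> es N" using U by blast
    show ?thesis
    proof (rule ex1I[of _ N])
      show "N \<in> (C - D) \<union> D' \<and> e \<in> set (map arc_edge N)" using N by (simp add: es_def)
      fix T' assume T': "T' \<in> (C - D) \<union> D' \<and> e \<in> set (map arc_edge T')"
      show "T' = N"
      proof (cases "T' \<in> D'")
        case True then show ?thesis using dj N T' by (auto simp: es_def)
      next
        case False
        then have "T' \<in> C" "T' \<notin> D" using T' by auto
        moreover obtain T where "T \<in> D" "e \<in> es T" using True by blast
        ultimately show ?thesis using uniq D T' by (metis es_def subsetD)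
      qed
    qed
  next
    case False
    obtain T where T: "T \<in> C" "e \<in> es T" using cover e by blast
    then have TD: "T \<notin> D" using False by blast
    show ?thesis
    proof (rule ex1I[of _ T])
      show "T \<in> (C - D) \<union> D' \<and> e \<in> set (map arc_edge T)" using T TD by (simp add: es_def)
      fix T' assume T': "T' \<in> (C - D) \<union> D' \<and> e \<in> set (map arc_edge T')"
      show "T' = T"
      proof (cases "T' \<in> D'")
        case True
        then have "e \<in> (\<Union>N\<in>D'. es N)" using T' by (auto simp: es_def)
        then show ?thesis using U False by blast
      next
        case False
        then show ?thesis using T' T uniq by (auto simp: es_def)
      qed
    qed
  qed
  have "card ((C - D) \<union> D') = card (C - D) + card D'"
    using disj finC finD' by (simp add: card_Un_disjoint)
  also have "\<dots> = card C" using cd D finC card_Diff_subset[of D C] card_mono[of C D]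
    by (simp add: finite_subset)
  finally have "card ((C - D) \<union> D') = deg H vert b div 2" using cardC by simp
  then show ?thesis using fin ci un by (simp add: flooding_def)
qed

lemma replace_nonzero:
  assumes "D \<subseteq> C" "finite D'" "(C - D) \<inter> D' = {}"
  shows "nonzero_count \<gamma> ((C - D) \<union> D') + nonzero_count \<gamma> D = nonzero_count \<gamma> C + nonzero_count \<gamma> D'"
proof -
  have fD: "finite D" using assms(1) finC finite_subset by blast
  have 1: "{T \<in> (C - D) \<union> D'. weight \<gamma> T = 1} = {T \<in> C - D. weight \<gamma> T = 1} \<union> {T \<in> D'. weight \<gamma> T = 1}" by blast
  have 2: "{T \<in> C. weight \<gamma> T = 1} = {T \<in> C - D. weight \<gamma> T = 1} \<union> {T \<in> D. weight \<gamma> T = 1}" using assms(1) by blast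
  have "card {T \<in> (C - D) \<union> D'. weight \<gamma> T = 1} = card {T \<in> C - D. weight \<gamma> T = 1} + card {T \<in> D'. weight \<gamma> T = 1}"
    unfolding 1 using assms finC by (intro card_Un_disjoint) auto
  moreover have "card {T \<in> C. weight \<gamma> T = 1} = card {T \<in> C - D. weight \<gamma> T = 1} + card {T \<in> D. weight \<gamma> T = 1}"
    unfolding 2 using assms finC fD by (intro card_Un_disjoint) auto
  ultimately show ?thesis by (simp add: nonzero_count_def)
qed

lemma replace_reps:
  assumes D: "D \<subseteq> C" and disj: "(C - D) \<inter> D' = {}"
    and g: "\<forall>T\<in>C. weight \<gamma> T = 0 \<longrightarrow> is_rep \<gamma> T (g T)" "inj_on g {T \<in> C. weight \<gamma> T = 0}"
    and r: "\<forall>N\<in>D'. weight \<gamma> N = 0 \<longrightarrow> is_rep \<gamma> N (\<rho> N)" "inj_on \<rho> {N \<in> D'. weight \<gamma> N = 0}"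
      "\<rho> ` {N \<in> D'. weight \<gamma> N = 0} = g ` {T \<in> D. weight \<gamma> T = 0}"
  shows "sys_reps \<gamma> ((C - D) \<union> D') (g ` {T \<in> C. weight \<gamma> T = 0})"
proof -
  define g' where "g' T = (if T \<in> D' then \<rho> T else g T)" for T
  let ?Z = "{T \<in> (C - D) \<union> D'. weight \<gamma> T = 0}"
  have Z: "?Z = {T \<in> C - D. weight \<gamma> T = 0} \<union> {N \<in> D'. weight \<gamma> N = 0}" by blast
  have im: "g' ` ?Z = g ` {T \<in> C. weight \<gamma> T = 0}"
  proof -
    have "g' ` {T \<in> C - D. weight \<gamma> T = 0} = g ` {T \<in> C - D. weight \<gamma> T = 0}"
      using disj by (auto simp: g'_def intro!: image_cong)
    moreover have "g' ` {N \<in> D'. weight \<gamma> N = 0} = \<rho> ` {N \<in> D'. weight \<gamma> N = 0}"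
      by (auto simp: g'_def intro!: image_cong)
    moreover have "{T \<in> C. weight \<gamma> T = 0} = {T \<in> C - D. weight \<gamma> T = 0} \<union> {T \<in> D. weight \<gamma> T = 0}"
      using D by blast
    ultimately show ?thesis unfolding Z image_Un using r(3) by (simp add: image_Un)
  qed
  have inj: "inj_on g' ?Z"
  proof (rule inj_onI)
    fix x y assume x: "x \<in> ?Z" and y: "y \<in> ?Z" and e: "g' x = g' y"
    show "x = y"
    proof (cases "x \<in> D'"; cases "y \<in> D'")
      assume "x \<in> D'" "y \<in> D'" then show ?thesis using e x y r(2) by (auto simp: g'_def inj_on_def)
    next
      assume "x \<notin> D'" "y \<notin> D'" then show ?thesis using e x y g(2) by (auto simp: g'_def inj_on_def)
    next
      assume a: "x \<in> D'" "y \<notin> D'"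
      have "\<rho> x \<in> \<rho> ` {N \<in> D'. weight \<gamma> N = 0}" using a x by blast
      then have "g y \<in> g ` {T \<in> D. weight \<gamma> T = 0}" using r(3) e a by (simp add: g'_def)
      then obtain t where t: "t \<in> D" "weight \<gamma> t = 0" "g y = g t" by blast
      have "y \<in> C" "weight \<gamma> y = 0" "y \<notin> D" using y a by auto
      then have "y = t" using t g(2) D by (auto simp: inj_on_def)
      then show ?thesis using t \<open>y \<notin> D\<close> by simp
    next
      assume a: "x \<notin> D'" "y \<in> D'"
      have "\<rho> y \<in> \<rho> ` {N \<in> D'. weight \<gamma> N = 0}" using a y by blast
      then have "g x \<in> g ` {T \<in> D. weight \<gamma> T = 0}" using r(3) e a by (simp add: g'_def)
      then obtain t where t: "t \<in> D" "weight \<gamma> t = 0" "g x = g t" by blast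
      have "x \<in> C" "weight \<gamma> x = 0" "x \<notin> D" using x a by auto
      then have "x = t" using t g(2) D by (auto simp: inj_on_def)
      then show ?thesis using t \<open>x \<notin> D\<close> by simp
    qed
  qed
  have rep: "\<forall>T\<in>(C - D) \<union> D'. weight \<gamma> T = 0 \<longrightarrow> is_rep \<gamma> T (g' T)"
    using g(1) r(1) by (auto simp: g'_def)
  show ?thesis unfolding sys_reps_def using rep inj im by blast
qed

end

locale fo = fl +
  fixes \<gamma> :: "'a set \<Rightarrow> bool" and g and B
  assumes opt: "optimal_flooding H vert mate \<gamma> b C"
    and greps: "\<forall>T\<in>C. weight \<gamma> T = 0 \<longrightarrow> is_rep \<gamma> T (g T)"
    and ginj: "inj_on g {T \<in> C. weight \<gamma> T = 0}"
    and Bdef: "B = g ` {T \<in> C. weight \<gamma> T = 0}"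
begin

definition good where "good C' \<longleftrightarrow> optimal_flooding H vert mate \<gamma> b C' \<and> sys_reps \<gamma> C' B"

lemma replace1:
  assumes T0: "T0 \<in> C" and N: "circuit_at H vert mate b N" "es N = es T0"
    and w: "weight \<gamma> N = weight \<gamma> T0" and r: "weight \<gamma> T0 = 0 \<Longrightarrow> is_rep \<gamma> N (g T0)"
  shows "good ((C - {T0}) \<union> {N})"
proof -
  have D: "{T0} \<subseteq> C" using T0 by simp
  have fl: "flooding H vert mate b ((C - {T0}) \<union> {N})"
    by (rule replace_flooding[OF D]) (use N in auto)
  have dj: "(C - {T0}) \<inter> {N} = {}" by (rule replace_disj[OF D]) (use N in auto)
  have "nonzero_count \<gamma> ((C - {T0}) \<union> {N}) + nonzero_count \<gamma> {T0} = nonzero_count \<gamma> C + nonzero_count \<gamma> {N}"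
    by (rule replace_nonzero[OF D _ dj]) simp
  moreover have "nonzero_count \<gamma> {T0} = nonzero_count \<gamma> {N}" using w by (simp add: nz1)
  ultimately have "nonzero_count \<gamma> ((C - {T0}) \<union> {N}) = nonzero_count \<gamma> C" by simp
  then have o: "optimal_flooding H vert mate \<gamma> b ((C - {T0}) \<union> {N})" using opt fl by (simp add: optimal_flooding_def)
  have s: "sys_reps \<gamma> ((C - {T0}) \<union> {N}) B" unfolding Bdef
  proof (rule replace_reps[OF D dj greps ginj, of "\<lambda>_. g T0"])
    show "\<forall>Na\<in>{N}. weight \<gamma> Na = 0 \<longrightarrow> is_rep \<gamma> Na (g T0)" using r w by simp
    show "inj_on (\<lambda>_. g T0) {Na \<in> {N}. weight \<gamma> Na = 0}" by (auto simp: inj_on_def)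
    show "(\<lambda>_. g T0) ` {Na \<in> {N}. weight \<gamma> Na = 0} = g ` {T \<in> {T0}. weight \<gamma> T = 0}" using w by auto
  qed
  show ?thesis using o s by (simp add: good_def)
qed

lemma replace2:
  assumes T: "T1 \<in> C" "T2 \<in> C" "T1 \<noteq> T2"
    and N: "circuit_at H vert mate b N1" "circuit_at H vert mate b N2"
    and E: "es N1 \<union> es N2 = es T1 \<union> es T2" "es N1 \<inter> es N2 = {}"
    and L: "La \<in> {N1, N2}" "Lb \<in> {N1, N2}"
    and r1: "weight \<gamma> T1 = 0 \<Longrightarrow> weight \<gamma> La = 0 \<and> is_rep \<gamma> La (g T1)"
    and r2: "weight \<gamma> T2 = 0 \<Longrightarrow> weight \<gamma> Lb = 0 \<and> is_rep \<gamma> Lb (g T2)"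
    and r12: "weight \<gamma> T1 = 0 \<Longrightarrow> weight \<gamma> T2 = 0 \<Longrightarrow> La \<noteq> Lb"
    and w: "weight \<gamma> N1 + weight \<gamma> N2 = weight \<gamma> T1 + weight \<gamma> T2"
  shows "good ((C - {T1, T2}) \<union> {N1, N2})"
proof -
  have D: "{T1, T2} \<subseteq> C" using T by simp
  have NN: "N1 \<noteq> N2" using E(2) es_ne[OF N(1)] by auto
  have fl: "flooding H vert mate b ((C - {T1, T2}) \<union> {N1, N2})"
    by (rule replace_flooding[OF D]) (use N E NN T in \<open>auto simp: Int_commute\<close>)
  have dj: "(C - {T1, T2}) \<inter> {N1, N2} = {}" by (rule replace_disj[OF D]) (use N E in auto)
  have "nonzero_count \<gamma> ((C - {T1, T2}) \<union> {N1, N2}) + nonzero_count \<gamma> {T1, T2} = nonzero_count \<gamma> C + nonzero_count \<gamma> {N1, N2}"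
    by (rule replace_nonzero[OF D _ dj]) simp
  moreover have "nonzero_count \<gamma> {T1, T2} = nonzero_count \<gamma> {N1, N2}"
    using w T(3) NN by (simp add: nz2)
  ultimately have "nonzero_count \<gamma> ((C - {T1, T2}) \<union> {N1, N2}) = nonzero_count \<gamma> C" by simp
  then have o: "optimal_flooding H vert mate \<gamma> b ((C - {T1, T2}) \<union> {N1, N2})" using opt fl by (simp add: optimal_flooding_def)
  define \<rho> where "\<rho> N = (if weight \<gamma> T1 = 0 \<and> N = La then g T1 else g T2)" for N
  have gd: "weight \<gamma> T1 = 0 \<Longrightarrow> weight \<gamma> T2 = 0 \<Longrightarrow> g T1 \<noteq> g T2"
    using ginj T by (auto simp: inj_on_def)
  have s: "sys_reps \<gamma> ((C - {T1, T2}) \<union> {N1, N2}) B" unfolding Bdef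
  proof (rule replace_reps[OF D dj greps ginj, of \<rho>])
    show "\<forall>N\<in>{N1, N2}. weight \<gamma> N = 0 \<longrightarrow> is_rep \<gamma> N (\<rho> N)"
      using r1 r2 r12 w L weight01[of \<gamma> T1] weight01[of \<gamma> T2] weight01[of \<gamma> N1] weight01[of \<gamma> N2]
      by (auto simp: \<rho>_def)
    show "inj_on \<rho> {N \<in> {N1, N2}. weight \<gamma> N = 0}"
      using r1 r2 r12 w L gd NN weight01[of \<gamma> T1] weight01[of \<gamma> T2] weight01[of \<gamma> N1] weight01[of \<gamma> N2]
      by (auto simp: \<rho>_def inj_on_def)
    show "\<rho> ` {N \<in> {N1, N2}. weight \<gamma> N = 0} = g ` {T \<in> {T1, T2}. weight \<gamma> T = 0}"
      using r1 r2 r12 w L NN T(3) weight01[of \<gamma> T1] weight01[of \<gamma> T2] weight01[of \<gamma> N1] weight01[of \<gamma> N2]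
      by (auto simp: \<rho>_def)
  qed
  show ?thesis using o s by (simp add: good_def)
qed

end

lemma split_uniq:
  assumes "distinct (a @ x # b)" "a @ x # b = c @ x # d"
  shows "a = c"
  using assms
proof (induction a arbitrary: c)
  case Nil
  then show ?case by (cases c) auto
next
  case (Cons y a)
  show ?case
  proof (cases c)
    case Nil
    then show ?thesis using Cons.prems by simp
  next
    case (Cons z c')
    then have "y = z" "a @ x # b = c' @ x # d" using Cons.prems by auto
    moreover have "distinct (a @ x # b)" using Cons.prems by simp
    ultimately show ?thesis using Cons.IH[of c'] Cons by simp
  qed
qed

lemma fst_hd_revT: "A \<noteq> [] \<Longrightarrow> fst (hd (revT A)) = snd (last A)"
  by (simp add: hd_revT)
lemma snd_last_revT: "A \<noteq> [] \<Longrightarrow> snd (last (revT A)) = fst (hd A)"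
  by (simp add: last_revT)

lemma distinct_of_edges: "distinct (map arc_edge T) \<Longrightarrow> distinct T"
  using distinct_map by blast

lemma rep_transfer:
  assumes r: "is_rep \<gamma> To p" and To: "To = A @ K @ Bs" and f: "fst p \<in> set K"
    and N: "N = A' @ K @ B'" and d0: "distinct (map arc_edge To)" and dN: "distinct (map arc_edge N)"
    and par: "odd (gc \<gamma> A') = odd (gc \<gamma> A)"
  shows "is_rep \<gamma> N p"
proof -
  obtain f \<alpha> where p: "p = (f, \<alpha>)" by (cases p)
  from r obtain xs ys where xs: "To = xs @ f # ys" "\<alpha> = weight \<gamma> (xs @ [f])"
    unfolding p is_rep_iff by blast
  from f have "f \<in> set K" unfolding p by simp
  then obtain K1 K2 where K: "K = K1 @ f # K2" using split_list by metis
  have "To = (A @ K1) @ f # (K2 @ Bs)" using To K by simp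
  then have "xs = A @ K1" using split_uniq[of xs f ys "A @ K1" "K2 @ Bs"] xs(1) d0 distinct_of_edges by metis
  have N': "N = (A' @ K1) @ f # (K2 @ B')" using N K by simp
  have "is_rep \<gamma> ((A' @ K1) @ f # (K2 @ B')) (f, weight \<gamma> ((A @ K1) @ [f]))"
  proof (rule rep_move)
    show "distinct (map arc_edge ((A @ K1) @ f # K2 @ Bs))"
      using d0 \<open>To = (A @ K1) @ f # (K2 @ Bs)\<close> by metis
    show "distinct (map arc_edge ((A' @ K1) @ f # K2 @ B'))" using dN N' by metis
    show "odd (gc \<gamma> (A @ K1)) = odd (gc \<gamma> (A' @ K1))" using par by simp
  qed
  then show ?thesis using N' p xs \<open>xs = A @ K1\<close> by simp
qed

context rg begin
lemma circ_join:
  assumes "is_trail H vert mate A" "is_trail H vert mate B"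
    "vert (fst (hd A)) = b" "vert (snd (last B)) = b"
    "vert (snd (last A)) = vert (fst (hd B))" "es A \<inter> es B = {}"
  shows "circuit_at H vert mate b (A @ B)"
  using assms trail_append[OF assms(1,2,5,6)] trail_ne[OF assms(1)] trail_ne[OF assms(2)]
  by (simp add: circuit_at_def)
end

context fl begin
lemma weight_circ: "circuit_at H vert mate b N \<Longrightarrow> weight \<gamma> N = (if odd (gc \<gamma> N) then 1 else 0)"
  by (rule weight_gc) (simp add: circuit_at_def is_trail_def)
lemma dist_circ: "circuit_at H vert mate b N \<Longrightarrow> distinct (map arc_edge N)"
  by (simp add: circuit_at_def is_trail_def)
end

context fo begin

lemma replace2_bound:
  assumes T: "T1 \<in> C" "T2 \<in> C" "T1 \<noteq> T2"
    and N: "circuit_at H vert mate b N1" "circuit_at H vert mate b N2"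
    and E: "es N1 \<union> es N2 = es T1 \<union> es T2" "es N1 \<inter> es N2 = {}"
  shows "weight \<gamma> N1 + weight \<gamma> N2 \<le> weight \<gamma> T1 + weight \<gamma> T2"
proof -
  have D: "{T1, T2} \<subseteq> C" using T by simp
  have NN: "N1 \<noteq> N2" using E(2) es_ne[OF N(1)] by auto
  have fl: "flooding H vert mate b ((C - {T1, T2}) \<union> {N1, N2})"
    by (rule replace_flooding[OF D]) (use N E NN T in \<open>auto simp: Int_commute\<close>)
  have dj: "(C - {T1, T2}) \<inter> {N1, N2} = {}" by (rule replace_disj[OF D]) (use N E in auto)
  have "nonzero_count \<gamma> ((C - {T1, T2}) \<union> {N1, N2}) + nonzero_count \<gamma> {T1, T2} = nonzero_count \<gamma> C + nonzero_count \<gamma> {N1, N2}"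
    by (rule replace_nonzero[OF D _ dj]) simp
  moreover have "nonzero_count \<gamma> ((C - {T1, T2}) \<union> {N1, N2}) \<le> nonzero_count \<gamma> C"
    using opt fl by (simp add: optimal_flooding_def)
  ultimately show ?thesis using NN T(3) by (simp add: nz2)
qed

lemma ft_mem: "N \<in> C' \<Longrightarrow> R \<in> trail_transitions N \<Longrightarrow> R \<in> flooding_transitions C'"
  by (auto simp: flooding_transitions_def)

lemma rep_mem: "T \<in> C \<Longrightarrow> weight \<gamma> T = 0 \<Longrightarrow> fst (g T) \<in> set T"
  using greps by (auto simp: is_rep_def)

lemma caseA:
  assumes T0: "T0 \<in> C" and T: "T \<in> C" "T0 \<noteq> T"
    and s0: "T0 = X @ Y" "X \<noteq> []" "Y \<noteq> []" and s1: "T = Z @ W" "Z \<noteq> []" "W \<noteq> []"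
    and vz: "vert (snd (last Z)) = vert (snd (last X))"
  shows "\<exists>C'. good C' \<and>
     (({snd (last X), fst (hd W)} \<in> flooding_transitions C' \<and> {snd (last Z), fst (hd Y)} \<in> flooding_transitions C') \<or>
      ({snd (last X), snd (last Z)} \<in> flooding_transitions C' \<and> {fst (hd W), fst (hd Y)} \<in> flooding_transitions C'))"
proof -
  have tr0: "is_trail H vert mate (X @ Y)" using trl[OF T0] s0 by simp
  have tr1: "is_trail H vert mate (Z @ W)" using trl[OF T(1)] s1 by simp
  have tX: "is_trail H vert mate X" and tY: "is_trail H vert mate Y"
    and vXY: "vert (snd (last X)) = vert (fst (hd Y))" and dXY: "es X \<inter> es Y = {}"
    using trail_appendD[OF tr0 s0(2,3)] by auto
  have tZ: "is_trail H vert mate Z" and tW: "is_trail H vert mate W"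
    and vZW: "vert (snd (last Z)) = vert (fst (hd W))" and dZW: "es Z \<inter> es W = {}"
    using trail_appendD[OF tr1 s1(2,3)] by auto
  have d01: "es T0 \<inter> es T = {}" using uniq T0 T by blast
  have bX: "vert (fst (hd X)) = b" using hd_b[OF T0] s0 by simp
  have bY: "vert (snd (last Y)) = b" using last_b[OF T0] s0 by simp
  have bZ: "vert (fst (hd Z)) = b" using hd_b[OF T(1)] s1 by simp
  have bW: "vert (snd (last W)) = b" using last_b[OF T(1)] s1 by simp
  have rZ: "is_trail H vert mate (revT Z)" "is_trail H vert mate (revT X)"
    "is_trail H vert mate (revT W)" "is_trail H vert mate (revT Y)"
    using trail_revT tZ tX tW tY by auto
  have ends: "fst (hd (revT Z)) = snd (last Z)" "snd (last (revT Z)) = fst (hd Z)"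
    "fst (hd (revT X)) = snd (last X)" "snd (last (revT X)) = fst (hd X)"
    "fst (hd (revT W)) = snd (last W)" "snd (last (revT W)) = fst (hd W)"
    "fst (hd (revT Y)) = snd (last Y)" "snd (last (revT Y)) = fst (hd Y)"
    "revT Z \<noteq> []" "revT X \<noteq> []" "revT W \<noteq> []" "revT Y \<noteq> []"
    using fst_hd_revT snd_last_revT s0(2,3) s1(2,3) by auto
  have c1: "circuit_at H vert mate b (X @ W)"
    by (rule circ_join[OF tX tW bX bW]) (use vXY vZW vz d01 s0 s1 in auto)
  have c2: "circuit_at H vert mate b (Z @ Y)"
    by (rule circ_join[OF tZ tY bZ bY]) (use vXY vZW vz d01 s0 s1 in auto)
  have c3: "circuit_at H vert mate b (X @ revT Z)"
    by (rule circ_join[OF tX rZ(1) bX]) (use vXY vZW vz d01 s0 s1 ends bZ in auto)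
  have c4: "circuit_at H vert mate b (revT W @ Y)"
    by (rule circ_join[OF rZ(3) tY _ bY]) (use vXY vZW vz d01 s0 s1 ends bW in auto)
  have c5: "circuit_at H vert mate b (revT Y @ W)"
    by (rule circ_join[OF rZ(4) tW _ bW]) (use vXY vZW vz d01 s0 s1 ends bY in auto)
  have c6: "circuit_at H vert mate b (Z @ revT X)"
    by (rule circ_join[OF tZ rZ(2) bZ]) (use vXY vZW vz d01 s0 s1 ends bX in auto)
  have E12: "es (X @ W) \<union> es (Z @ Y) = es T0 \<union> es T" "es (X @ W) \<inter> es (Z @ Y) = {}"
    using s0 s1 dXY dZW d01 by auto
  have E34: "es (X @ revT Z) \<union> es (revT W @ Y) = es T0 \<union> es T" "es (X @ revT Z) \<inter> es (revT W @ Y) = {}"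
    using s0 s1 dXY dZW d01 by auto
  have E35: "es (X @ revT Z) \<union> es (revT Y @ W) = es T0 \<union> es T" "es (X @ revT Z) \<inter> es (revT Y @ W) = {}"
    using s0 s1 dXY dZW d01 by auto
  have E64: "es (Z @ revT X) \<union> es (revT W @ Y) = es T0 \<union> es T" "es (Z @ revT X) \<inter> es (revT W @ Y) = {}"
    using s0 s1 dXY dZW d01 by auto
  have tr: "{snd (last X), fst (hd W)} \<in> trail_transitions (X @ W)"
    "{snd (last Z), fst (hd Y)} \<in> trail_transitions (Z @ Y)"
    "{snd (last X), snd (last Z)} \<in> trail_transitions (X @ revT Z)"
    "{fst (hd W), fst (hd Y)} \<in> trail_transitions (revT W @ Y)"
    "{fst (hd W), fst (hd Y)} \<in> trail_transitions (revT Y @ W)"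
    "{snd (last X), snd (last Z)} \<in> trail_transitions (Z @ revT X)"
  proof -
    show "{snd (last X), fst (hd W)} \<in> trail_transitions (X @ W)"
      by (rule trail_transitions_append[OF s0(2) s1(3)])
    show "{snd (last Z), fst (hd Y)} \<in> trail_transitions (Z @ Y)"
      by (rule trail_transitions_append[OF s1(2) s0(3)])
    show "{snd (last X), snd (last Z)} \<in> trail_transitions (X @ revT Z)"
      using trail_transitions_append[OF s0(2) ends(9)] ends(1) by simp
    show "{fst (hd W), fst (hd Y)} \<in> trail_transitions (revT W @ Y)"
      using trail_transitions_append[OF ends(11) s0(3)] ends(6) by simp
    have "{fst (hd Y), fst (hd W)} \<in> trail_transitions (revT Y @ W)"
      using trail_transitions_append[OF ends(12) s1(3)] ends(8) by simp
    then show "{fst (hd W), fst (hd Y)} \<in> trail_transitions (revT Y @ W)"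
      by (metis insert_commute)
    have "{snd (last Z), snd (last X)} \<in> trail_transitions (Z @ revT X)"
      using trail_transitions_append[OF s1(2) ends(10)] ends(3) by simp
    then show "{snd (last X), snd (last Z)} \<in> trail_transitions (Z @ revT X)"
      by (metis insert_commute)
  qed
  define px where "px = odd (gc \<gamma> X)"
  define py where "py = odd (gc \<gamma> Y)"
  define pz where "pz = odd (gc \<gamma> Z)"
  define pw where "pw = odd (gc \<gamma> W)"
  have w0: "weight \<gamma> T0 = (if px = py then 0 else 1)"
    using weight_circ[OF circ[OF T0]] s0 by (simp add: px_def py_def)
  have w1: "weight \<gamma> T = (if pz = pw then 0 else 1)"
    using weight_circ[OF circ[OF T(1)]] s1 by (simp add: pz_def pw_def)
  have wc1: "weight \<gamma> (X @ W) = (if px = pw then 0 else 1)"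
    using weight_circ[OF c1] by (simp add: px_def pw_def)
  have wc2: "weight \<gamma> (Z @ Y) = (if pz = py then 0 else 1)"
    using weight_circ[OF c2] by (simp add: pz_def py_def)
  have wc3: "weight \<gamma> (X @ revT Z) = (if px = pz then 0 else 1)"
    using weight_circ[OF c3] by (simp add: px_def pz_def)
  have wc4: "weight \<gamma> (revT W @ Y) = (if pw = py then 0 else 1)"
    using weight_circ[OF c4] by (simp add: pw_def py_def)
  have wc5: "weight \<gamma> (revT Y @ W) = (if py = pw then 0 else 1)"
    using weight_circ[OF c5] by (simp add: pw_def py_def)
  have wc6: "weight \<gamma> (Z @ revT X) = (if pz = px then 0 else 1)"
    using weight_circ[OF c6] by (simp add: px_def pz_def)
  have B12: "weight \<gamma> (X @ W) + weight \<gamma> (Z @ Y) \<le> weight \<gamma> T0 + weight \<gamma> T"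
    by (rule replace2_bound[OF T0 T c1 c2 E12])
  have d0: "distinct (map arc_edge T0)" "distinct (map arc_edge T)"
    using trl[OF T0] trl[OF T(1)] trail_distinct by blast+
  have rT0: "is_rep \<gamma> T0 (g T0)" if "weight \<gamma> T0 = 0" using greps T0 that by blast
  have rT: "is_rep \<gamma> T (g T)" if "weight \<gamma> T = 0" using greps T(1) that by blast
  have repX: "is_rep \<gamma> (X @ R') (g T0)" if "weight \<gamma> T0 = 0" "fst (g T0) \<in> set X"
     "distinct (map arc_edge (X @ R'))" for R'
  proof (rule rep_transfer[where To=T0 and A="[]" and K=X and Bs=Y and A'="[]" and B'=R'])
    show "is_rep \<gamma> T0 (g T0)" by (rule rT0[OF that(1)])
  qed (use s0 that(2,3) d0(1) in simp_all)
  have repY: "is_rep \<gamma> (P @ Y) (g T0)" if "weight \<gamma> T0 = 0" "fst (g T0) \<notin> set X"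
     "distinct (map arc_edge (P @ Y))" "odd (gc \<gamma> P) = px" for P
  proof (rule rep_transfer[where To=T0 and A=X and K=Y and Bs="[]" and A'=P and B'="[]"])
    show "is_rep \<gamma> T0 (g T0)" by (rule rT0[OF that(1)])
    show "fst (g T0) \<in> set Y" using rep_mem[OF T0 that(1)] that(2) s0 by auto
  qed (use s0 that(3,4) d0(1) px_def in simp_all)
  have repZ: "is_rep \<gamma> (Z @ R') (g T)" if "weight \<gamma> T = 0" "fst (g T) \<in> set Z"
     "distinct (map arc_edge (Z @ R'))" for R'
  proof (rule rep_transfer[where To=T and A="[]" and K=Z and Bs=W and A'="[]" and B'=R'])
    show "is_rep \<gamma> T (g T)" by (rule rT[OF that(1)])
  qed (use s1 that(2,3) d0(2) in simp_all)
  have repW: "is_rep \<gamma> (P @ W) (g T)" if "weight \<gamma> T = 0" "fst (g T) \<notin> set Z"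
     "distinct (map arc_edge (P @ W))" "odd (gc \<gamma> P) = pz" for P
  proof (rule rep_transfer[where To=T and A=Z and K=W and Bs="[]" and A'=P and B'="[]"])
    show "is_rep \<gamma> T (g T)" by (rule rT[OF that(1)])
    show "fst (g T) \<in> set W" using rep_mem[OF T(1) that(1)] that(2) s1 by auto
  qed (use s1 that(3,4) d0(2) pz_def in simp_all)
  have nq: "X @ W \<noteq> Z @ Y" "X @ revT Z \<noteq> revT Y @ W" "revT W @ Y \<noteq> Z @ revT X"
  proof -
    have k: "A \<noteq> B" if "es A \<inter> es B = {}" "A \<noteq> []" for A B :: "'a arc list"
      using that by (cases A) (auto simp: es_def)
    show "X @ W \<noteq> Z @ Y" using k[OF E12(2)] s0 by simp
    show "X @ revT Z \<noteq> revT Y @ W" using k[OF E35(2)] s0 by simp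
    have "Z @ revT X \<noteq> revT W @ Y" using k[OF E64(2)] s1 by simp
    then show "revT W @ Y \<noteq> Z @ revT X" by metis
  qed
  note dc = dist_circ[OF c1] dist_circ[OF c2] dist_circ[OF c3] dist_circ[OF c4] dist_circ[OF c5] dist_circ[OF c6]
  have gcr: "odd (gc \<gamma> (revT W)) = pw" "odd (gc \<gamma> (revT Y)) = py" using pw_def py_def by auto
  define O1 where "O1 = (C - {T0, T}) \<union> {X @ W, Z @ Y}"
  define O2a where "O2a = (C - {T0, T}) \<union> {X @ revT Z, revT W @ Y}"
  define O2b where "O2b = (C - {T0, T}) \<union> {X @ revT Z, revT Y @ W}"
  define O2c where "O2c = (C - {T0, T}) \<union> {Z @ revT X, revT W @ Y}"
  have tO1: "{snd (last X), fst (hd W)} \<in> flooding_transitions O1 \<and> {snd (last Z), fst (hd Y)} \<in> flooding_transitions O1"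
  proof -
    have m: "X @ W \<in> O1" "Z @ Y \<in> O1" unfolding O1_def by auto
    show ?thesis using ft_mem[OF m(1) tr(1)] ft_mem[OF m(2) tr(2)] by simp
  qed
  have tO2a: "{snd (last X), snd (last Z)} \<in> flooding_transitions O2a \<and> {fst (hd W), fst (hd Y)} \<in> flooding_transitions O2a"
  proof -
    have m: "X @ revT Z \<in> O2a" "revT W @ Y \<in> O2a" unfolding O2a_def by auto
    show ?thesis using ft_mem[OF m(1) tr(3)] ft_mem[OF m(2) tr(4)] by simp
  qed
  have tO2b: "{snd (last X), snd (last Z)} \<in> flooding_transitions O2b \<and> {fst (hd W), fst (hd Y)} \<in> flooding_transitions O2b"
  proof -
    have m: "X @ revT Z \<in> O2b" "revT Y @ W \<in> O2b" unfolding O2b_def by auto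
    show ?thesis using ft_mem[OF m(1) tr(3)] ft_mem[OF m(2) tr(5)] by simp
  qed
  have tO2c: "{snd (last X), snd (last Z)} \<in> flooding_transitions O2c \<and> {fst (hd W), fst (hd Y)} \<in> flooding_transitions O2c"
  proof -
    have m: "Z @ revT X \<in> O2c" "revT W @ Y \<in> O2c" unfolding O2c_def by auto
    show ?thesis using ft_mem[OF m(1) tr(6)] ft_mem[OF m(2) tr(4)] by simp
  qed
  have B34: "weight \<gamma> (X @ revT Z) + weight \<gamma> (revT W @ Y) \<le> weight \<gamma> T0 + weight \<gamma> T"
    by (rule replace2_bound[OF T0 T c3 c4 E34])
  let ?inX = "fst (g T0) \<in> set X"
  let ?inZ = "fst (g T) \<in> set Z"
  have "good O1 \<or> good O2a \<or> good O2b \<or> good O2c"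
  proof (cases "px = py"; cases "pz = pw")
    assume a: "px = py" "pz = pw"
    then have eq: "px = pw" "pz = py" using B12 w0 w1 wc1 wc2 by (auto split: if_splits)
    show ?thesis
    proof (cases ?inX; cases ?inZ)
      assume i: ?inX ?inZ
      have "good O1" unfolding O1_def
        by (rule replace2[OF T0 T c1 c2 E12, where La = "X @ W" and Lb = "Z @ Y"])
          (use a eq i w0 w1 wc1 wc2 repX repZ dc nq in auto)
      then show ?thesis by simp
    next
      assume i: "\<not> ?inX" "\<not> ?inZ"
      have "good O1" unfolding O1_def
        by (rule replace2[OF T0 T c1 c2 E12, where La = "Z @ Y" and Lb = "X @ W"])
          (use a eq i w0 w1 wc1 wc2 repY[of Z] repW[of X] dc px_def pz_def nq in auto)
      then show ?thesis by simp
    next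
      assume i: ?inX "\<not> ?inZ"
      have "good O2b" unfolding O2b_def
        by (rule replace2[OF T0 T c3 c5 E35, where La = "X @ revT Z" and Lb = "revT Y @ W"])
          (use a eq i w0 w1 wc3 wc5 repX repW[of "revT Y"] dc gcr nq in auto)
      then show ?thesis by simp
    next
      assume i: "\<not> ?inX" ?inZ
      have "good O2c" unfolding O2c_def
        by (rule replace2[OF T0 T c6 c4 E64, where La = "revT W @ Y" and Lb = "Z @ revT X"])
          (use a eq i w0 w1 wc6 wc4 repY[of "revT W"] repZ dc gcr nq in auto)
      then show ?thesis by simp
    qed
  next
    assume a: "px = py" "pz \<noteq> pw"
    show ?thesis
    proof (cases ?inX)
      case i: True
      show ?thesis
      proof (cases "px = pw")
        case True
        have "good O1" unfolding O1_def
          by (rule replace2[OF T0 T c1 c2 E12, where La = "X @ W" and Lb = "X @ W"])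
            (use a True i w0 w1 wc1 wc2 repX dc in auto)
        then show ?thesis by simp
      next
        case False
        have "good O2a" unfolding O2a_def
          by (rule replace2[OF T0 T c3 c4 E34, where La = "X @ revT Z" and Lb = "X @ revT Z"])
            (use a False i w0 w1 wc3 wc4 repX dc in auto)
        then show ?thesis by simp
      qed
    next
      case i: False
      show ?thesis
      proof (cases "pz = py")
        case True
        have "good O1" unfolding O1_def
          by (rule replace2[OF T0 T c1 c2 E12, where La = "Z @ Y" and Lb = "Z @ Y"])
            (use a True i w0 w1 wc1 wc2 repY[of Z] dc pz_def in auto)
        then show ?thesis by simp
      next
        case False
        have "good O2a" unfolding O2a_def
          by (rule replace2[OF T0 T c3 c4 E34, where La = "revT W @ Y" and Lb = "revT W @ Y"])
            (use a False i w0 w1 wc3 wc4 repY[of "revT W"] dc gcr in auto)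
        then show ?thesis by simp
      qed
    qed
  next
    assume a: "px \<noteq> py" "pz = pw"
    show ?thesis
    proof (cases ?inZ)
      case i: True
      show ?thesis
      proof (cases "pz = py")
        case True
        have "good O1" unfolding O1_def
          by (rule replace2[OF T0 T c1 c2 E12, where La = "Z @ Y" and Lb = "Z @ Y"])
            (use a True i w0 w1 wc1 wc2 repZ dc in auto)
        then show ?thesis by simp
      next
        case False
        have "good O2c" unfolding O2c_def
          by (rule replace2[OF T0 T c6 c4 E64, where La = "Z @ revT X" and Lb = "Z @ revT X"])
            (use a False i w0 w1 wc6 wc4 repZ dc in auto)
        then show ?thesis by simp
      qed
    next
      case i: False
      show ?thesis
      proof (cases "px = pw")
        case True
        have "good O1" unfolding O1_def
          by (rule replace2[OF T0 T c1 c2 E12, where La = "X @ W" and Lb = "X @ W"])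
            (use a True i w0 w1 wc1 wc2 repW[of X] dc px_def in auto)
        then show ?thesis by simp
      next
        case False
        have "good O2b" unfolding O2b_def
          by (rule replace2[OF T0 T c3 c5 E35, where La = "revT Y @ W" and Lb = "revT Y @ W"])
            (use a False i w0 w1 wc3 wc5 repW[of "revT Y"] dc gcr in auto)
        then show ?thesis by simp
      qed
    qed
  next
    assume a: "px \<noteq> py" "pz \<noteq> pw"
    show ?thesis
    proof (cases "px = pw")
      case False
      have "good O1" unfolding O1_def
        by (rule replace2[OF T0 T c1 c2 E12, where La = "X @ W" and Lb = "X @ W"])
          (use a False w0 w1 wc1 wc2 in auto)
      then show ?thesis by simp
    next
      case True
      have "good O2a" unfolding O2a_def
        by (rule replace2[OF T0 T c3 c4 E34, where La = "X @ revT Z" and Lb = "X @ revT Z"])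
          (use a True w0 w1 wc3 wc4 in auto)
      then show ?thesis by simp
    qed
  qed
  then show ?thesis using tO1 tO2a tO2b tO2c by blast
qed

end

context fo begin

lemma splice:
  assumes T0: "T0 \<in> C" "weight \<gamma> T0 = 0" "T0 = P @ Q @ R" and fQ: "fst (g T0) \<in> set Q"
    and tS: "is_trail H vert mate S" and S: "S = S1 @ S2" "S1 \<noteq> []" "S2 \<noteq> []"
    and bS: "vert (fst (hd S1)) = b" "vert (snd (last S2)) = b" and dSQ: "es S \<inter> es Q = {}"
    and tQ: "is_trail H vert mate Q" and vQ: "vert (snd (last Q)) = vert (fst (hd Q))"
    and Q: "Q = Q1 @ Q2" "Q1 \<noteq> []" and u: "vert (snd (last Q1)) = vert (snd (last S1))"
  shows "\<exists>N. circuit_at H vert mate b N \<and> es N = es S \<union> es Q \<and> odd (gc \<gamma> N) = odd (gc \<gamma> S + gc \<gamma> Q)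
     \<and> trail_transitions S1 \<subseteq> trail_transitions N \<and> trail_transitions S2 \<subseteq> trail_transitions N
     \<and> (odd (gc \<gamma> S) \<longrightarrow> is_rep \<gamma> N (g T0))"
proof -
  define u where "u = vert (snd (last S1))"
  define Qr where "Qr = Q2 @ Q1"
  have tS1: "is_trail H vert mate S1" and tS2: "is_trail H vert mate S2"
    and vS: "vert (snd (last S1)) = vert (fst (hd S2))" and dS: "es S1 \<inter> es S2 = {}"
    using trail_appendD[of H vert mate S1 S2] tS S by auto
  have Qr: "is_trail H vert mate Qr \<and> vert (fst (hd Qr)) = u \<and> vert (snd (last Qr)) = u \<and> Qr \<noteq> []"
  proof (cases "Q2 = []")
    case True
    then show ?thesis using Q tQ vQ u by (simp add: Qr_def u_def)
  next
    case False
    have tQ1: "is_trail H vert mate Q1" and tQ2: "is_trail H vert mate Q2"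
      and vQ12: "vert (snd (last Q1)) = vert (fst (hd Q2))" and dQ: "es Q1 \<inter> es Q2 = {}"
      using trail_appendD[of H vert mate Q1 Q2] tQ Q False by auto
    have "is_trail H vert mate (Q2 @ Q1)"
      by (rule trail_append[OF tQ2 tQ1]) (use vQ Q False dQ in auto)
    then show ?thesis using vQ12 u False Q by (simp add: Qr_def u_def)
  qed
  have esQr: "es Qr = es Q" "gc \<gamma> Qr = gc \<gamma> Q" using Q by (auto simp: Qr_def)
  have dSQr: "es S1 \<inter> es Qr = {}" "es S2 \<inter> es Qr = {}" using dSQ esQr S by auto
  have rS: "is_trail H vert mate (revT S1)" "is_trail H vert mate (revT S2)" using trail_revT tS1 tS2 by auto
  have e1: "fst (hd (revT S2)) = snd (last S2)" "snd (last (revT S2)) = fst (hd S2)"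
    "fst (hd (revT S1)) = snd (last S1)" "snd (last (revT S1)) = fst (hd S1)"
    using S fst_hd_revT snd_last_revT by auto
  have tQS2: "is_trail H vert mate (Qr @ S2)"
    by (rule trail_append) (use Qr tS2 vS u_def dSQr in auto)
  have c1: "circuit_at H vert mate b (S1 @ Qr @ S2)"
    by (rule circ_join[OF tS1 tQS2 bS(1)]) (use Qr S vS u_def dSQr dS bS in auto)
  have tQS1: "is_trail H vert mate (Qr @ revT S1)"
    by (rule trail_append) (use Qr rS e1 u_def dSQr in auto)
  have c2: "circuit_at H vert mate b (revT S2 @ Qr @ revT S1)"
    by (rule circ_join[OF rS(2) tQS1]) (use Qr S vS u_def dSQr dS bS e1 in auto)
  have es12: "es (S1 @ Qr @ S2) = es S \<union> es Q" "es (revT S2 @ Qr @ revT S1) = es S \<union> es Q"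
    using S esQr by auto
  have gc12: "odd (gc \<gamma> (S1 @ Qr @ S2)) = odd (gc \<gamma> S + gc \<gamma> Q)"
    "odd (gc \<gamma> (revT S2 @ Qr @ revT S1)) = odd (gc \<gamma> S + gc \<gamma> Q)"
    using S esQr by auto
  have tt12: "trail_transitions S1 \<subseteq> trail_transitions (S1 @ Qr @ S2)"
     "trail_transitions S2 \<subseteq> trail_transitions (S1 @ Qr @ S2)"
     "trail_transitions S1 \<subseteq> trail_transitions (revT S2 @ Qr @ revT S1)"
     "trail_transitions S2 \<subseteq> trail_transitions (revT S2 @ Qr @ revT S1)"
    using trail_transitions_mono_right[of S1 "Qr @ S2"] trail_transitions_mono_left[of S2 "S1 @ Qr"]
      trail_transitions_mono_left[of "revT S1" "revT S2 @ Qr"] trail_transitions_mono_right[of "revT S2" "Qr @ revT S1"]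
    by auto
  have d0: "distinct (map arc_edge T0)" using trl[OF T0(1)] trail_distinct by blast
  have dN: "distinct (map arc_edge (S1 @ Qr @ S2))" "distinct (map arc_edge (revT S2 @ Qr @ revT S1))"
    by (rule dist_circ[OF c1], rule dist_circ[OF c2])
  have r0: "is_rep \<gamma> T0 (g T0)" using greps T0 by blast
  have rr: "is_rep \<gamma> (S1 @ Qr @ S2) (g T0) \<or> is_rep \<gamma> (revT S2 @ Qr @ revT S1) (g T0)" if oS: "odd (gc \<gamma> S)"
  proof (cases "fst (g T0) \<in> set Q1")
    case True
    have o12: "odd (gc \<gamma> S1) \<noteq> odd (gc \<gamma> S2)" using oS S by auto
    show ?thesis
    proof (cases "odd (gc \<gamma> (S1 @ Q2)) = odd (gc \<gamma> P)")
      case True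
      have "is_rep \<gamma> (S1 @ Qr @ S2) (g T0)"
        by (rule rep_transfer[where To=T0 and A=P and K=Q1 and Bs="Q2 @ R" and A'="S1 @ Q2" and B'=S2])
          (use r0 T0 Q \<open>fst (g T0) \<in> set Q1\<close> d0 dN True in \<open>simp_all add: Qr_def\<close>)
      then show ?thesis by simp
    next
      case False
      have "is_rep \<gamma> (revT S2 @ Qr @ revT S1) (g T0)"
        by (rule rep_transfer[where To=T0 and A=P and K=Q1 and Bs="Q2 @ R" and A'="revT S2 @ Q2" and B'="revT S1"])
          (use r0 T0 Q \<open>fst (g T0) \<in> set Q1\<close> d0 dN False o12 in \<open>simp_all add: Qr_def\<close>)
      then show ?thesis by simp
    qed
  next
    case nQ1: False
    then have f2: "fst (g T0) \<in> set Q2" using fQ Q by auto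
    have o12: "odd (gc \<gamma> S1) \<noteq> odd (gc \<gamma> S2)" using oS S by auto
    show ?thesis
    proof (cases "odd (gc \<gamma> S1) = odd (gc \<gamma> (P @ Q1))")
      case True
      have "is_rep \<gamma> (S1 @ Qr @ S2) (g T0)"
        by (rule rep_transfer[where To=T0 and A="P @ Q1" and K=Q2 and Bs=R and A'=S1 and B'="Q1 @ S2"])
          (use r0 T0 Q f2 d0 dN True in \<open>simp_all add: Qr_def\<close>)
      then show ?thesis by simp
    next
      case False
      have "is_rep \<gamma> (revT S2 @ Qr @ revT S1) (g T0)"
        by (rule rep_transfer[where To=T0 and A="P @ Q1" and K=Q2 and Bs=R and A'="revT S2" and B'="Q1 @ revT S1"])
          (use r0 T0 Q f2 d0 dN False o12 in \<open>simp_all add: Qr_def\<close>)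
      then show ?thesis by simp
    qed
  qed
  then show ?thesis
  proof (cases "odd (gc \<gamma> S)")
    case True
    then show ?thesis using rr c1 c2 es12 gc12 tt12 by blast
  next
    case False
    then show ?thesis using c1 es12 gc12 tt12 by blast
  qed
qed

end

context fl begin

lemma he_junction:
  assumes T: "is_trail H vert mate T" "vert (fst (hd T)) = b" "vert (snd (last T)) = b"
    and j: "j < length T" "x = fst (T ! j) \<or> x = snd (T ! j)"
  shows "vert x = b \<or> (\<exists>k. Suc k < length T \<and> vert x = vert (snd (T ! k)) \<and> (x = snd (T ! k) \<or> x = fst (T ! Suc k)))"
  using j(2)
proof
  assume x: "x = fst (T ! j)"
  show ?thesis
  proof (cases j)
    case 0
    then show ?thesis using x T j trail_ne by (simp add: hd_conv_nth)
  next
    case (Suc k)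
    then have "Suc k < length T" using j by simp
    then show ?thesis using x trail_consec[OF T(1)] Suc by metis
  qed
next
  assume x: "x = snd (T ! j)"
  show ?thesis
  proof (cases "Suc j < length T")
    case True then show ?thesis using x by blast
  next
    case False
    then have "j = length T - 1" using j by simp
    then have "T ! j = last T" using j trail_ne[OF T(1)] by (simp add: last_conv_nth)
    then show ?thesis using x T by simp
  qed
qed

lemma arc_edge_snd: "is_arc H mate a \<Longrightarrow> arc_edge a = {snd a, mate (snd a)}"
  using arc_edge_eq in_arc_edge_snd by metis

lemma split_exists:
  assumes T0: "T0 \<in> C" "T0 = P @ Q @ R" "P \<noteq> []" "Q \<noteq> []" "R \<noteq> []"
    and F1: "\<forall>T\<in>C. \<forall>k. Suc k < length T \<longrightarrow> vert (snd (T ! k)) \<noteq> b"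
    and fec: "four_edge_connected H V vert mate b"
    and vPQ: "vert (snd (last P)) = vert (snd (last Q))"
  shows "(\<exists>T'\<in>C. T' \<noteq> T0 \<and> (\<exists>k. Suc k < length T' \<and> vert (snd (T' ! k)) \<in> vert ` snd ` set Q)) \<or>
         (\<exists>k. Suc k < length (P @ R) \<and> k \<noteq> length P - 1 \<and> vert (snd ((P @ R) ! k)) \<in> vert ` snd ` set Q)"
proof (rule ccontr)
  define Y where "Y = vert ` snd ` set Q"
  assume "\<not> ?thesis"
  then have n1: "\<And>T' k. T' \<in> C \<Longrightarrow> T' \<noteq> T0 \<Longrightarrow> Suc k < length T' \<Longrightarrow> vert (snd (T' ! k)) \<notin> Y"
    and n2: "\<And>k. Suc k < length (P @ R) \<Longrightarrow> k \<noteq> length P - 1 \<Longrightarrow> vert (snd ((P @ R) ! k)) \<notin> Y"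
    unfolding Y_def by blast+
  define p where "p = snd (last P)"
  define r where "r = fst (hd R)"
  define v where "v = vert (snd (last Q))"
  have tr0: "is_trail H vert mate (P @ (Q @ R))" using trl[OF T0(1)] T0(2) by simp
  have tP: "is_trail H vert mate P" and tQR: "is_trail H vert mate (Q @ R)"
    and vP: "vert (snd (last P)) = vert (fst (hd (Q @ R)))" and dP: "es P \<inter> es (Q @ R) = {}"
    using trail_appendD[OF tr0] T0 by auto
  have tQ: "is_trail H vert mate Q" and tR: "is_trail H vert mate R"
    and vQ: "vert (snd (last Q)) = vert (fst (hd R))" and dQ: "es Q \<inter> es R = {}"
    using trail_appendD[OF tQR] T0 by auto
  have tS: "is_trail H vert mate (P @ R)"
    by (rule trail_append[OF tP tR]) (use vPQ vQ dP in auto)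
  have bS: "vert (fst (hd (P @ R))) = b" "vert (snd (last (P @ R))) = b"
    using hd_b[OF T0(1)] last_b[OF T0(1)] T0 by auto
  have vp: "vert p = v" using vPQ by (simp add: p_def v_def)
  have vr: "vert r = v" using vQ by (simp add: r_def v_def)
  have vY: "v \<in> Y" using T0(4) by (simp add: Y_def v_def)
  have Yb: "Y \<subseteq> V - {b}"
  proof
    fix y assume "y \<in> Y"
    then obtain m where m: "m < length Q" "y = vert (snd (Q ! m))" by (auto simp: Y_def in_set_conv_nth)
    have "T0 ! (length P + m) = Q ! m" using T0(2) m by (simp add: nth_append)
    moreover have "Suc (length P + m) < length T0" using T0 m by (cases R) auto
    ultimately have "y \<noteq> b" using F1 T0(1) m by metis
    moreover have "y \<in> V" using m arcH[OF T0(1), of "Q ! m"] vert_in T0(2) by simp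
    ultimately show "y \<in> V - {b}" by simp
  qed
  define hQ where "hQ = {z. \<exists>a\<in>set Q. z \<in> arc_edge a}"
  have claimB: "vert z \<in> Y \<and> mate z \<in> hQ" if z: "z \<in> hQ" for z
  proof -
    obtain a where a: "a \<in> set Q" "z \<in> arc_edge a" using z by (auto simp: hQ_def)
    have ar: "is_arc H mate a" using trail_arc[OF tQ a(1)] .
    then have ae: "arc_edge a = {z, mate z}" using arc_edge_eq a(2) by blast
    have "mate z \<in> hQ" using ae a(1) by (auto simp: hQ_def)
    moreover have "vert z \<in> Y"
    proof (cases "z = snd a")
      case True then show ?thesis using a by (simp add: Y_def)
    next
      case False
      then have zf: "z = fst a" using a(2) by (simp add: arc_edge_def)
      obtain m where m: "m < length Q" "a = Q ! m" using a(1) by (auto simp: in_set_conv_nth)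
      show ?thesis
      proof (cases m)
        case 0
        then have "vert z = vert (fst (hd Q))" using zf m T0(4) by (simp add: hd_conv_nth)
        then show ?thesis using vY vP vPQ T0(4) by (simp add: v_def)
      next
        case (Suc k)
        then have "vert (snd (Q ! k)) = vert (fst (Q ! Suc k))" using trail_consec[OF tQ] m by simp
        moreover have "Q ! k \<in> set Q" using Suc m by simp
        moreover have "vert (snd (Q ! k)) \<in> Y" unfolding Y_def using \<open>Q ! k \<in> set Q\<close> by blast
        ultimately show ?thesis using zf m Suc by simp
      qed
    qed
    ultimately show ?thesis by simp
  qed
  have claimA: "x \<in> hQ \<or> x = p \<or> x = r" if x: "x \<in> H" "vert x \<in> Y" for x
  proof -
    obtain T i where T: "T \<in> C" "i < length T" "x = fst (T ! i) \<or> x = snd (T ! i)"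
      using half_cover x(1) by blast
    show ?thesis
    proof (cases "T = T0")
      case False
      have "vert x = b \<or> (\<exists>k. Suc k < length T \<and> vert x = vert (snd (T ! k)) \<and> (x = snd (T ! k) \<or> x = fst (T ! Suc k)))"
        by (rule he_junction[OF trl[OF T(1)] hd_b[OF T(1)] last_b[OF T(1)] T(2,3)])
      moreover have "vert x \<noteq> b" using Yb x(2) by blast
      ultimately obtain k where "Suc k < length T" "vert x = vert (snd (T ! k))" by blast
      then have False using n1[OF T(1) False] x(2) by simp
      then show ?thesis ..
    next
      case True
      have "T ! i \<in> set T0" using T(2) True by simp
      then have iS: "T ! i \<in> set (P @ R) \<or> T ! i \<in> set Q" using T0(2) by auto
      show ?thesis
      proof (cases "T ! i \<in> set Q")
        case True
        then show ?thesis using T(3) by (auto simp: hQ_def arc_edge_def)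
      next
        case False
        then have "T ! i \<in> set (P @ R)" using iS by blast
        then obtain j where j: "j < length (P @ R)" "(P @ R) ! j = T ! i" by (metis in_set_conv_nth)
        have "vert x = b \<or> (\<exists>k. Suc k < length (P @ R) \<and> vert x = vert (snd ((P @ R) ! k)) \<and> (x = snd ((P @ R) ! k) \<or> x = fst ((P @ R) ! Suc k)))"
          by (rule he_junction[OF tS bS j(1)]) (use T(3) j(2) in simp)
        moreover have "vert x \<noteq> b" using Yb x(2) by blast
        ultimately obtain k where k: "Suc k < length (P @ R)" "vert x = vert (snd ((P @ R) ! k))"
            "x = snd ((P @ R) ! k) \<or> x = fst ((P @ R) ! Suc k)"
          by blast
        have "k = length P - 1" by (rule ccontr) (use n2[OF k(1)] k(2) x(2) in simp)
        then have "(P @ R) ! k = last P" "(P @ R) ! Suc k = hd R"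
          using T0(3,5) by (auto simp: nth_append last_conv_nth hd_conv_nth)
        then show ?thesis using k(3) by (auto simp: p_def r_def)
      qed
    qed
  qed
  have arP: "is_arc H mate (last P)" using trail_arc[OF tP] T0(3) by simp
  have arR: "is_arc H mate (hd R)" using trail_arc[OF tR] T0(5) by simp
  have eP: "arc_edge (last P) = {p, mate p}" using arc_edge_snd[OF arP] by (simp add: p_def)
  have eR: "arc_edge (hd R) = {r, mate r}" using arc_edge_eq[OF arR, of r] by (simp add: r_def arc_edge_def)
  have pH: "p \<in> H" "r \<in> H" using arP arR arc_snd_in by (auto simp: p_def r_def is_arc_def)
  have esP: "{p, mate p} \<in> es P" unfolding es_def eP[symmetric] using T0(3) by simp
  have esR: "{r, mate r} \<in> es R" unfolding es_def eR[symmetric] using T0(5) by simp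
  have esQ: "{z, mate z} \<in> es Q" if zq: "z \<in> hQ" for z
  proof -
    obtain a where a: "a \<in> set Q" "z \<in> arc_edge a" using zq unfolding hQ_def by blast
    then have "arc_edge a = {z, mate z}" using arc_edge_eq trail_arc[OF tQ a(1)] by blast
    then show ?thesis using a by (auto simp: es_def)
  qed
  have dPQR: "es P \<inter> es Q = {}" "es P \<inter> es R = {}" using dP by auto
  have pr: "{p, mate p} \<noteq> {r, mate r}" using esP esR dPQR by auto
  have mp: "vert (mate p) \<notin> Y"
  proof
    assume a: "vert (mate p) \<in> Y"
    have "mate p \<in> H" using pH mate_in by blast
    then have "mate p \<in> hQ \<or> mate p = p \<or> mate p = r" using claimA a by blast
    moreover have "mate p \<notin> hQ"
    proof
      assume "mate p \<in> hQ"
      then have "{mate p, mate (mate p)} \<in> es Q" using esQ by blast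
      moreover have "{mate p, mate (mate p)} = {p, mate p}" using pH(1) by auto
      ultimately have "{p, mate p} \<in> es Q" by simp
      then show False using esP dPQR by auto
    qed
    moreover have "mate p \<noteq> p" using mate_neq pH by blast
    moreover have "mate p \<noteq> r"
    proof
      assume e: "mate p = r"
      then have "mate r = p" using pH(1) by auto
      then have "{r, mate r} = {p, mate p}" using e by auto
      then show False using pr by simp
    qed
    ultimately show False by blast
  qed
  have mr: "vert (mate r) \<notin> Y"
  proof
    assume a: "vert (mate r) \<in> Y"
    have "mate r \<in> H" using pH mate_in by blast
    then have "mate r \<in> hQ \<or> mate r = p \<or> mate r = r" using claimA a by blast
    moreover have "mate r \<notin> hQ"
    proof
      assume "mate r \<in> hQ"
      then have "{mate r, mate (mate r)} \<in> es Q" using esQ by blast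
      moreover have "{mate r, mate (mate r)} = {r, mate r}" using pH(2) by auto
      ultimately have "{r, mate r} \<in> es Q" by simp
      then show False using esR dQ by auto
    qed
    moreover have "mate r \<noteq> r" using mate_neq pH by blast
    moreover have "mate r \<noteq> p"
    proof
      assume e: "mate r = p"
      then have "mate p = r" using pH(2) by auto
      then have "{r, mate r} = {p, mate p}" using e by auto
      then show False using pr by simp
    qed
    ultimately show False by blast
  qed
  have cutY: "cut H vert mate Y = {{p, mate p}, {r, mate r}}"
  proof
    show "cut H vert mate Y \<subseteq> {{p, mate p}, {r, mate r}}"
    proof
      fix e assume "e \<in> cut H vert mate Y"
      then have "\<exists>x. e = {x, mate x} \<and> x \<in> H \<and> vert x \<in> Y \<and> vert (mate x) \<notin> Y"
        unfolding cut_def by simp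
      then obtain x where "e = {x, mate x} \<and> x \<in> H \<and> vert x \<in> Y \<and> vert (mate x) \<notin> Y"
        by (rule exE)
      then have x: "e = {x, mate x}" "x \<in> H" "vert x \<in> Y" "vert (mate x) \<notin> Y" by simp_all
      have "x \<notin> hQ" using claimB x(4) by blast
      then have "x = p \<or> x = r" using claimA x(2,3) by blast
      then show "e \<in> {{p, mate p}, {r, mate r}}" using x(1) by (elim disjE) simp_all
    qed
    have "{p, mate p} \<in> cut H vert mate Y" unfolding cut_def
      by (intro CollectI exI[of _ p]) (use pH(1) vp vY mp in simp)
    moreover have "{r, mate r} \<in> cut H vert mate Y" unfolding cut_def
      by (intro CollectI exI[of _ r]) (use pH(2) vr vY mr in simp)
    ultimately show "{{p, mate p}, {r, mate r}} \<subseteq> cut H vert mate Y" by simp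
  qed
  have "card (cut H vert mate Y) = 2" using cutY pr by simp
  then show False using fec Yb unfolding four_edge_connected_def by blast
qed

end

context fo begin

lemma caseB:
  assumes T0: "T0 \<in> C" "T0 = P @ Q @ R" "P \<noteq> []" "Q \<noteq> []" "R \<noteq> []"
    and F1: "\<forall>T\<in>C. \<forall>k. Suc k < length T \<longrightarrow> vert (snd (T ! k)) \<noteq> b"
    and fec: "four_edge_connected H V vert mate b"
    and vPQ: "vert (snd (last P)) = vert (snd (last Q))"
  shows "\<exists>C'. good C' \<and> ({snd (last P), fst (hd R)} \<in> flooding_transitions C' \<or>
     ({snd (last P), snd (last Q)} \<in> flooding_transitions C' \<and> {fst (hd Q), fst (hd R)} \<in> flooding_transitions C'))"
proof -
  have tr0: "is_trail H vert mate (P @ (Q @ R))" using trl[OF T0(1)] T0(2) by simp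
  have tP: "is_trail H vert mate P" and tQR: "is_trail H vert mate (Q @ R)"
    and vP: "vert (snd (last P)) = vert (fst (hd (Q @ R)))" and dP: "es P \<inter> es (Q @ R) = {}"
    using trail_appendD[OF tr0] T0 by auto
  have tQ: "is_trail H vert mate Q" and tR: "is_trail H vert mate R"
    and vQ: "vert (snd (last Q)) = vert (fst (hd R))" and dQ: "es Q \<inter> es R = {}"
    using trail_appendD[OF tQR] T0 by auto
  have vPQ': "vert (snd (last P)) = vert (fst (hd Q))" using vP T0 by simp
  have bP: "vert (fst (hd P)) = b" and bR: "vert (snd (last R)) = b"
    using hd_b[OF T0(1)] last_b[OF T0(1)] T0 by auto
  have d0: "distinct (map arc_edge T0)" using trl[OF T0(1)] trail_distinct by blast
  have dPQR: "es P \<inter> es Q = {}" "es P \<inter> es R = {}" using dP by auto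
  have rQ: "is_trail H vert mate (revT Q)" using trail_revT[OF tQ] .
  have eQ: "fst (hd (revT Q)) = snd (last Q)" "snd (last (revT Q)) = fst (hd Q)" "revT Q \<noteq> []"
    using T0(4) fst_hd_revT snd_last_revT by auto
  define N1 where "N1 = P @ revT Q @ R"
  have tQR': "is_trail H vert mate (revT Q @ R)"
    by (rule trail_append[OF rQ tR]) (use eQ vPQ vPQ' vQ dQ in auto)
  have cN1: "circuit_at H vert mate b N1" unfolding N1_def
    by (rule circ_join[OF tP tQR' bP]) (use eQ vPQ vPQ' vQ dPQR bR T0 in auto)
  have esN1: "es N1 = es T0" "gc \<gamma> N1 = gc \<gamma> T0" using T0 by (auto simp: N1_def)
  have wN1: "weight \<gamma> N1 = weight \<gamma> T0" using weight_circ[OF cN1] weight_circ[OF circ[OF T0(1)]] esN1 by simp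
  have tN1: "{snd (last P), snd (last Q)} \<in> trail_transitions N1" "{fst (hd Q), fst (hd R)} \<in> trail_transitions N1"
  proof -
    show "{snd (last P), snd (last Q)} \<in> trail_transitions N1"
      using trail_transitions_append[OF T0(3), of "revT Q @ R"] eQ unfolding N1_def by simp
    have "{fst (hd Q), fst (hd R)} \<in> trail_transitions (revT Q @ R)"
      using trail_transitions_append[OF eQ(3) T0(5)] eQ by simp
    then show "{fst (hd Q), fst (hd R)} \<in> trail_transitions N1"
      using trail_transitions_mono_left[of "revT Q @ R" P] unfolding N1_def by auto
  qed
  define N2 where "N2 = revT N1"
  have cN2: "circuit_at H vert mate b N2" using circuit_revT[OF cN1] by (simp add: N2_def)
  have N2: "N2 = revT R @ Q @ revT P" by (simp add: N2_def N1_def)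
  have wN2: "weight \<gamma> N2 = weight \<gamma> T0" using weight_circ[OF cN2] weight_circ[OF cN1] wN1 by (simp add: N2_def)
  have tN2: "{snd (last P), snd (last Q)} \<in> trail_transitions N2" "{fst (hd Q), fst (hd R)} \<in> trail_transitions N2"
    using tN1 by (simp_all add: N2_def)
  have r0: "is_rep \<gamma> T0 (g T0)" if "weight \<gamma> T0 = 0" using greps T0(1) that by blast
  have fT0: "fst (g T0) \<in> set P \<or> fst (g T0) \<in> set Q \<or> fst (g T0) \<in> set R" if "weight \<gamma> T0 = 0"
    using rep_mem[OF T0(1) that] T0(2) by auto
  have dN1: "distinct (map arc_edge N1)" by (rule dist_circ[OF cN1])
  have dN2: "distinct (map arc_edge N2)" by (rule dist_circ[OF cN2])
  show ?thesis
  proof (cases "weight \<gamma> T0 = 0 \<and> fst (g T0) \<in> set Q")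
    case False
    have rep: "is_rep \<gamma> N1 (g T0)" if w: "weight \<gamma> T0 = 0"
    proof -
      have "fst (g T0) \<in> set P \<or> fst (g T0) \<in> set R" using fT0[OF w] False w by auto
      then show ?thesis
      proof
        assume fP: "fst (g T0) \<in> set P"
        show ?thesis
        proof (rule rep_transfer[where To=T0 and A="[]" and K=P and Bs="Q @ R" and A'="[]" and B'="revT Q @ R"])
          show "is_rep \<gamma> T0 (g T0)" by (rule r0[OF w])
          show "T0 = [] @ P @ Q @ R" using T0(2) by simp
          show "fst (g T0) \<in> set P" by (rule fP)
          show "N1 = [] @ P @ revT Q @ R" by (simp add: N1_def)
          show "distinct (map arc_edge T0)" by (rule d0)
          show "distinct (map arc_edge N1)" by (rule dN1)
          show "odd (gc \<gamma> []) = odd (gc \<gamma> [])" by simp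
        qed
      next
        assume fR: "fst (g T0) \<in> set R"
        show ?thesis
        proof (rule rep_transfer[where To=T0 and A="P @ Q" and K=R and Bs="[]" and A'="P @ revT Q" and B'="[]"])
          show "is_rep \<gamma> T0 (g T0)" by (rule r0[OF w])
          show "T0 = (P @ Q) @ R @ []" using T0(2) by simp
          show "fst (g T0) \<in> set R" by (rule fR)
          show "N1 = (P @ revT Q) @ R @ []" by (simp add: N1_def)
          show "distinct (map arc_edge T0)" by (rule d0)
          show "distinct (map arc_edge N1)" by (rule dN1)
          show "odd (gc \<gamma> (P @ revT Q)) = odd (gc \<gamma> (P @ Q))" by simp
        qed
      qed
    qed
    have "good ((C - {T0}) \<union> {N1})"
      by (rule replace1[OF T0(1) cN1 esN1(1) wN1 rep])
    moreover have "{snd (last P), snd (last Q)} \<in> flooding_transitions ((C - {T0}) \<union> {N1})"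
      "{fst (hd Q), fst (hd R)} \<in> flooding_transitions ((C - {T0}) \<union> {N1})"
      using ft_mem[OF _ tN1(1)] ft_mem[OF _ tN1(2)] by auto
    ultimately show ?thesis by blast
  next
    case True
    then have w0: "weight \<gamma> T0 = 0" and fQ: "fst (g T0) \<in> set Q" by auto
    have eT0: "even (gc \<gamma> T0)" using weight_circ[OF circ[OF T0(1)]] w0 by (simp split: if_splits)
    show ?thesis
    proof (cases "even (gc \<gamma> Q)")
      case True
      have rep: "is_rep \<gamma> N2 (g T0)"
      proof (rule rep_transfer[where To=T0 and A=P and K=Q and Bs=R and A'="revT R" and B'="revT P"])
        show "is_rep \<gamma> T0 (g T0)" by (rule r0[OF w0])
        show "T0 = P @ Q @ R" by (rule T0(2))
        show "fst (g T0) \<in> set Q" by (rule fQ)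
        show "N2 = revT R @ Q @ revT P" by (rule N2)
        show "distinct (map arc_edge T0)" by (rule d0)
        show "distinct (map arc_edge N2)" by (rule dN2)
        show "odd (gc \<gamma> (revT R)) = odd (gc \<gamma> P)" using True eT0 T0(2) by simp
      qed
      have "good ((C - {T0}) \<union> {N2})"
        by (rule replace1[OF T0(1) cN2]) (use esN1 wN2 rep in \<open>simp_all add: N2_def\<close>)
      moreover have "{snd (last P), snd (last Q)} \<in> flooding_transitions ((C - {T0}) \<union> {N2})"
        "{fst (hd Q), fst (hd R)} \<in> flooding_transitions ((C - {T0}) \<union> {N2})"
        using ft_mem[OF _ tN2(1)] ft_mem[OF _ tN2(2)] by auto
      ultimately show ?thesis by blast
    next
      case oQ: False
      define S where "S = P @ R"
      have tS: "is_trail H vert mate S" unfolding S_def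
        by (rule trail_append[OF tP tR]) (use vPQ vQ dPQR in auto)
      have oS: "odd (gc \<gamma> S)" using oQ eT0 T0(2) by (simp add: S_def)
      have dSQ: "es S \<inter> es Q = {}" using dPQR dQ by (auto simp: S_def)
      have vQQ: "vert (snd (last Q)) = vert (fst (hd Q))" using vPQ vPQ' by simp
      have tSS: "{snd (last P), fst (hd R)} \<in> trail_transitions S"
        unfolding S_def by (rule trail_transitions_append[OF T0(3) T0(5)])
      have qsplit: "\<exists>Q1 Q2. Q = Q1 @ Q2 \<and> Q1 \<noteq> [] \<and> vert (snd (last Q1)) = u" if uq: "u \<in> vert ` snd ` set Q" for u
      proof -
        obtain a where a: "a \<in> set Q" "u = vert (snd a)" using uq by blast
        then obtain m where m: "m < length Q" "u = vert (snd (Q ! m))" by (metis in_set_conv_nth)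
        have "Q = take (Suc m) Q @ drop (Suc m) Q" by simp
        moreover have "take (Suc m) Q \<noteq> []" using m by (cases Q) auto
        moreover have "last (take (Suc m) Q) = Q ! m" using m by (simp add: take_Suc_conv_app_nth)
        ultimately show ?thesis using m by metis
      qed
      have ex: "(\<exists>T'\<in>C. T' \<noteq> T0 \<and> (\<exists>k. Suc k < length T' \<and> vert (snd (T' ! k)) \<in> vert ` snd ` set Q)) \<or>
         (\<exists>k. Suc k < length (P @ R) \<and> k \<noteq> length P - 1 \<and> vert (snd ((P @ R) ! k)) \<in> vert ` snd ` set Q)"
        by (rule split_exists[OF T0 F1 fec vPQ])
      then show ?thesis
      proof
        assume "\<exists>T'\<in>C. T' \<noteq> T0 \<and> (\<exists>k. Suc k < length T' \<and> vert (snd (T' ! k)) \<in> vert ` snd ` set Q)"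
        then obtain T' k where T': "T' \<in> C" "T' \<noteq> T0" "Suc k < length T'" "vert (snd (T' ! k)) \<in> vert ` snd ` set Q"
          by blast
        define S1 where "S1 = take (Suc k) T'"
        define S2 where "S2 = drop (Suc k) T'"
        have S12: "T' = S1 @ S2" "S1 \<noteq> []" "S2 \<noteq> []" using T'(3) by (auto simp: S1_def S2_def)
        have lS1: "last S1 = T' ! k" using T'(3) by (simp add: S1_def take_Suc_conv_app_nth)
        obtain Q1 Q2 where Q: "Q = Q1 @ Q2" "Q1 \<noteq> []" "vert (snd (last Q1)) = vert (snd (last S1))"
          using qsplit[OF T'(4)] lS1 by metis
        have bS: "vert (fst (hd S1)) = b" "vert (snd (last S2)) = b"
          using hd_b[OF T'(1)] last_b[OF T'(1)] S12 by auto
        have dTQ: "es T' \<inter> es Q = {}"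
        proof -
          have "es T' \<inter> es T0 = {}" using uniq T'(1,2) T0(1) by blast
          then show ?thesis using T0(2) by auto
        qed
        obtain N where N: "circuit_at H vert mate b N" "es N = es T' \<union> es Q"
          "odd (gc \<gamma> N) = odd (gc \<gamma> T' + gc \<gamma> Q)" "odd (gc \<gamma> T') \<longrightarrow> is_rep \<gamma> N (g T0)"
          using splice[OF T0(1) w0 T0(2) fQ trl[OF T'(1)] S12 bS dTQ tQ vQQ Q] by blast
        have cS: "circuit_at H vert mate b S" using tS bP bR T0 by (simp add: circuit_at_def S_def)
        have wS: "weight \<gamma> S = 1" using weight_circ[OF cS] oS by simp
        have E: "es S \<union> es N = es T0 \<union> es T'" "es S \<inter> es N = {}"
          using N(2) T0(2) dSQ dTQ uniq[OF T'(1) T0(1)] T'(2) by (auto simp: S_def)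
        have wT': "weight \<gamma> T' = (if odd (gc \<gamma> T') then 1 else 0)" by (rule weight_circ[OF circ[OF T'(1)]])
        have wN: "weight \<gamma> N = (if odd (gc \<gamma> N) then 1 else 0)" by (rule weight_circ[OF N(1)])
        have oT': "odd (gc \<gamma> T')"
        proof (rule ccontr)
          assume "\<not> odd (gc \<gamma> T')"
          then have "weight \<gamma> S + weight \<gamma> N > weight \<gamma> T0 + weight \<gamma> T'"
            using wS wN N(3) oQ wT' w0 by simp
          moreover have "weight \<gamma> S + weight \<gamma> N \<le> weight \<gamma> T0 + weight \<gamma> T'"
            by (rule replace2_bound[OF T0(1) T'(1) T'(2)[symmetric] cS N(1) E])
          ultimately show False by simp
        qed
        have "good ((C - {T0, T'}) \<union> {S, N})"
          by (rule replace2[OF T0(1) T'(1) T'(2)[symmetric] cS N(1) E, where La = N and Lb = N])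
            (use N oT' wN wS wT' w0 oQ in auto)
        moreover have "{snd (last P), fst (hd R)} \<in> flooding_transitions ((C - {T0, T'}) \<union> {S, N})"
          using ft_mem[OF _ tSS] by auto
        ultimately show ?thesis by blast
      next
        assume "\<exists>k. Suc k < length (P @ R) \<and> k \<noteq> length P - 1 \<and> vert (snd ((P @ R) ! k)) \<in> vert ` snd ` set Q"
        then obtain k where k: "Suc k < length S" "k \<noteq> length P - 1" "vert (snd (S ! k)) \<in> vert ` snd ` set Q"
          unfolding S_def by blast
        define S1 where "S1 = take (Suc k) S"
        define S2 where "S2 = drop (Suc k) S"
        have S12: "S = S1 @ S2" "S1 \<noteq> []" "S2 \<noteq> []" using k(1) by (auto simp: S1_def S2_def)
        have lS1: "last S1 = S ! k" using k(1) by (simp add: S1_def take_Suc_conv_app_nth)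
        obtain Q1 Q2 where Q: "Q = Q1 @ Q2" "Q1 \<noteq> []" "vert (snd (last Q1)) = vert (snd (last S1))"
          using qsplit[OF k(3)] lS1 by metis
        have "hd S = hd S1" "last S = last S2" using S12 by simp_all
        moreover have "hd S = hd P" "last S = last R" using T0(3,5) by (simp_all add: S_def)
        ultimately have bS: "vert (fst (hd S1)) = b" "vert (snd (last S2)) = b"
          using bP bR by simp_all
        obtain N where N: "circuit_at H vert mate b N" "es N = es S \<union> es Q"
          "odd (gc \<gamma> N) = odd (gc \<gamma> S + gc \<gamma> Q)" "trail_transitions S1 \<subseteq> trail_transitions N"
          "trail_transitions S2 \<subseteq> trail_transitions N" "odd (gc \<gamma> S) \<longrightarrow> is_rep \<gamma> N (g T0)"
          using splice[OF T0(1) w0 T0(2) fQ tS S12 bS dSQ tQ vQQ Q] by blast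
        have esN: "es N = es T0" using N(2) T0(2) by (auto simp: S_def)
        have wN: "weight \<gamma> N = weight \<gamma> T0" using weight_circ[OF N(1)] N(3) oS oQ w0 by simp
        have tr: "{snd (last P), fst (hd R)} \<in> trail_transitions N"
        proof (cases "k < length P - 1")
          case True
          have "S2 = drop (Suc k) P @ R" using True by (simp add: S2_def S_def)
          moreover have "drop (Suc k) P \<noteq> []" using True by simp
          moreover have "last (drop (Suc k) P) = last P" using True by simp
          ultimately have "{snd (last P), fst (hd R)} \<in> trail_transitions S2"
            using trail_transitions_append[of "drop (Suc k) P" R] T0(5) by simp
          then show ?thesis using N(5) by blast
        next
          case False
          then have kP: "length P \<le> k" using k(2) by simp
          have "S1 = P @ take (Suc k - length P) R" using kP by (simp add: S1_def S_def)
          moreover have "take (Suc k - length P) R \<noteq> []" using kP T0(5) by simp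
          moreover have "hd (take (Suc k - length P) R) = hd R" using kP T0(5) by (simp add: hd_take)
          ultimately have "{snd (last P), fst (hd R)} \<in> trail_transitions S1"
            using trail_transitions_append[of P "take (Suc k - length P) R"] T0(3) by simp
          then show ?thesis using N(4) by blast
        qed
        have "good ((C - {T0}) \<union> {N})"
          by (rule replace1[OF T0(1) N(1) esN wN]) (use N(6) oS in simp)
        moreover have "{snd (last P), fst (hd R)} \<in> flooding_transitions ((C - {T0}) \<union> {N})"
          using ft_mem[OF _ tr] by auto
        ultimately show ?thesis by blast
      qed
    qed
  qed
qed

end

lemma count_lemma:
  fixes S G :: "'a set" and p :: "'a \<Rightarrow> 'a"
  assumes fin: "finite S" and h: "h \<in> S" "hs \<in> S" "hs \<noteq> h"
    and G: "G \<subseteq> S - {h}" "hs \<in> G"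
    and p: "\<And>x. x \<in> S - {h, hs} \<Longrightarrow> p x \<in> S - {h, hs}"
      "\<And>x. x \<in> S - {h, hs} \<Longrightarrow> p (p x) = x"
      "\<And>x. x \<in> S - {h, hs} \<Longrightarrow> x \<in> G \<or> p x \<in> G"
  shows "2 * card G > card S - 1"
proof -
  define S0 where "S0 = S - {h, hs}"
  define N where "N = S0 - G"
  have fS0: "finite S0" using fin by (simp add: S0_def)
  have inj: "inj_on p N"
  proof (rule inj_onI)
    fix x y assume a: "x \<in> N" "y \<in> N" "p x = p y"
    then have "x \<in> S - {h, hs}" "y \<in> S - {h, hs}" by (auto simp: N_def S0_def)
    then have "x = p (p x)" "y = p (p y)" using p(2) by auto
    then show "x = y" using a(3) by simp
  qed
  have sub: "p ` N \<subseteq> S0 \<inter> G" using p unfolding N_def S0_def by blast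
  have "card N = card (p ` N)" using inj by (simp add: card_image)
  also have "\<dots> \<le> card (S0 \<inter> G)" using sub fS0 by (intro card_mono) auto
  finally have cN: "card N \<le> card (S0 \<inter> G)" .
  have "S0 = N \<union> (S0 \<inter> G)" by (auto simp: N_def)
  moreover have "N \<inter> (S0 \<inter> G) = {}" by (auto simp: N_def)
  ultimately have c0: "card S0 = card N + card (S0 \<inter> G)"
    using fS0 by (metis card_Un_disjoint finite_Un)
  have "G = insert hs (S0 \<inter> G)" using G by (auto simp: S0_def)
  moreover have "hs \<notin> S0 \<inter> G" by (simp add: S0_def)
  moreover have "finite (S0 \<inter> G)" using fS0 by simp
  ultimately have cG: "card G = Suc (card (S0 \<inter> G))" by (metis card_insert_disjoint)
  have "card S0 = card S - 2" using h fin by (simp add: S0_def card_Diff_subset)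
  moreover have "card S \<ge> 2"
  proof -
    have "{h, hs} \<subseteq> S" using h by simp
    then have "card {h, hs} \<le> card S" using fin card_mono by blast
    then show ?thesis using h by simp
  qed
  ultimately show ?thesis using c0 cN cG by linarith
qed

lemma trans_at_char:
  assumes "h \<in> H" "vert h = v"
  shows "transitions_at_with H vert v h = (\<lambda>y. {h, y}) ` {y \<in> H. vert y = v \<and> y \<noteq> h}"
proof
  show "transitions_at_with H vert v h \<subseteq> (\<lambda>y. {h, y}) ` {y \<in> H. vert y = v \<and> y \<noteq> h}"
  proof
    fix R assume "R \<in> transitions_at_with H vert v h"
    then obtain h1 h2 where R: "R = {h1, h2}" "h1 \<noteq> h2" "h1 \<in> H" "h2 \<in> H" "vert h1 = v" "vert h2 = v" "h \<in> R"
      unfolding transitions_at_with_def by blast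
    show "R \<in> (\<lambda>y. {h, y}) ` {y \<in> H. vert y = v \<and> y \<noteq> h}"
    proof (cases "h = h1")
      case True
      then show ?thesis using R by auto
    next
      case False
      then have "h = h2" using R by auto
      then have "R = {h, h1}" using R by auto
      then show ?thesis using R False by auto
    qed
  qed
  show "(\<lambda>y. {h, y}) ` {y \<in> H. vert y = v \<and> y \<noteq> h} \<subseteq> transitions_at_with H vert v h"
    using assms unfolding transitions_at_with_def by blast
qed

lemma inj_pair: "inj_on (\<lambda>y. {h, y}) {y. y \<noteq> h}"
  by (rule inj_onI) (auto simp: doubleton_eq_iff)

context fl begin

lemma jn_ex:
  assumes "x \<in> H" "vert x \<noteq> b"
  shows "\<exists>T i. T \<in> C \<and> Suc i < length T \<and> (x = snd (T ! i) \<or> x = fst (T ! Suc i))"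
proof -
  obtain T j where T: "T \<in> C" "j < length T" "x = fst (T ! j) \<or> x = snd (T ! j)"
    using half_cover assms(1) by blast
  have "vert x = b \<or> (\<exists>k. Suc k < length T \<and> vert x = vert (snd (T ! k)) \<and> (x = snd (T ! k) \<or> x = fst (T ! Suc k)))"
    by (rule he_junction[OF trl[OF T(1)] hd_b[OF T(1)] last_b[OF T(1)] T(2,3)])
  then show ?thesis using assms T(1) by blast
qed

lemma jn_uniq:
  assumes T: "T \<in> C" "Suc i < length T" and T': "T' \<in> C" "Suc j < length T'"
    and x: "x = snd (T ! i) \<or> x = fst (T ! Suc i)" "x = snd (T' ! j) \<or> x = fst (T' ! Suc j)"
  shows "T = T' \<and> i = j"
proof -
  have ar: "is_arc H mate (T ! i)" "is_arc H mate (T ! Suc i)"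
    using arc_in[OF T(1)] T(2) by auto
  have fs: "fst (T ! k) \<noteq> snd (T ! k)" if "k < length T" for k
    using arc_fst_snd arc_in[OF T(1)] that by simp
  consider (a) "x = snd (T ! i)" "x = snd (T' ! j)" | (b) "x = snd (T ! i)" "x = fst (T' ! Suc j)"
    | (c) "x = fst (T ! Suc i)" "x = snd (T' ! j)" | (d) "x = fst (T ! Suc i)" "x = fst (T' ! Suc j)"
    using x by blast
  then show ?thesis
  proof cases
    case a
    then show ?thesis using pos_uniq[OF T(1) T'(1), of i j x] T T' in_arc_edge_snd by (metis Suc_lessD)
  next
    case b
    then have "T = T' \<and> i = Suc j" using pos_uniq[OF T(1) T'(1), of i "Suc j" x] T T' in_arc_edge_snd in_arc_edge_fst
      by (metis Suc_lessD)
    then show ?thesis using b fs T by (metis Suc_lessD)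
  next
    case c
    then have "T = T' \<and> Suc i = j" using pos_uniq[OF T(1) T'(1), of "Suc i" j x] T T' in_arc_edge_snd in_arc_edge_fst
      by (metis Suc_lessD)
    then show ?thesis using c fs T' by (metis Suc_lessD)
  next
    case d
    then have "T = T' \<and> Suc i = Suc j" using pos_uniq[OF T(1) T'(1), of "Suc i" "Suc j" x] T T' in_arc_edge_fst
      by metis
    then show ?thesis by simp
  qed
qed

end


lemma split2:
  assumes "Suc i < length T"
  shows "T = take (Suc i) T @ drop (Suc i) T" "take (Suc i) T \<noteq> []" "drop (Suc i) T \<noteq> []"
    "last (take (Suc i) T) = T ! i" "hd (drop (Suc i) T) = T ! Suc i"
proof -
  show "T = take (Suc i) T @ drop (Suc i) T" by simp
qed (use assms in \<open>auto simp: take_Suc_conv_app_nth hd_drop_conv_nth\<close>)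

lemma split3:
  assumes "i1 < i2" "Suc i2 < length T"
  shows "T = take (Suc i1) T @ take (i2 - i1) (drop (Suc i1) T) @ drop (Suc i2) T"
    "take (Suc i1) T \<noteq> []" "take (i2 - i1) (drop (Suc i1) T) \<noteq> []" "drop (Suc i2) T \<noteq> []"
    "last (take (Suc i1) T) = T ! i1" "hd (take (i2 - i1) (drop (Suc i1) T)) = T ! Suc i1"
    "last (take (i2 - i1) (drop (Suc i1) T)) = T ! i2" "hd (drop (Suc i2) T) = T ! Suc i2"
proof -
  have d: "drop (i2 - i1) (drop (Suc i1) T) = drop (Suc i2) T" using assms by (simp add: add.commute)
  show "T = take (Suc i1) T @ take (i2 - i1) (drop (Suc i1) T) @ drop (Suc i2) T"
    by (metis append_take_drop_id d)
  show "take (Suc i1) T \<noteq> []" "drop (Suc i2) T \<noteq> []" using assms by auto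
  show "take (i2 - i1) (drop (Suc i1) T) \<noteq> []" using assms by auto
  show "last (take (Suc i1) T) = T ! i1" using assms by (simp add: take_Suc_conv_app_nth)
  show "hd (take (i2 - i1) (drop (Suc i1) T)) = T ! Suc i1" using assms
    by (simp add: hd_drop_conv_nth)
  show "hd (drop (Suc i2) T) = T ! Suc i2" using assms by (simp add: hd_drop_conv_nth)
  have "take (i2 - i1) (drop (Suc i1) T) \<noteq> []" using assms by auto
  moreover have L: "length (take (i2 - i1) (drop (Suc i1) T)) = i2 - i1" using assms by simp
  ultimately have "last (take (i2 - i1) (drop (Suc i1) T)) = take (i2 - i1) (drop (Suc i1) T) ! (i2 - i1 - 1)"
    using last_conv_nth by metis
  also have "\<dots> = drop (Suc i1) T ! (i2 - i1 - 1)" using assms by (intro nth_take) simp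
  also have "\<dots> = T ! (Suc i1 + (i2 - i1 - 1))" using assms by (intro nth_drop) simp
  also have "Suc i1 + (i2 - i1 - 1) = i2" using assms by simp
  finally show "last (take (i2 - i1) (drop (Suc i1) T)) = T ! i2" .
qed

context fl begin

lemma jn_basic:
  assumes T: "T \<in> C" "Suc i < length T"
  shows "snd (T ! i) \<in> H" "fst (T ! Suc i) \<in> H" "snd (T ! i) \<noteq> fst (T ! Suc i)"
    "vert (snd (T ! i)) = vert (fst (T ! Suc i))"
proof -
  have m: "T ! i \<in> set T" "T ! Suc i \<in> set T" using T by auto
  show "snd (T ! i) \<in> H" "fst (T ! Suc i) \<in> H" using arcH[OF T(1) m(1)] arcH[OF T(1) m(2)] by auto
  show "snd (T ! i) \<noteq> fst (T ! Suc i)"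
  proof
    assume e: "snd (T ! i) = fst (T ! Suc i)"
    have "T = T \<and> i = Suc i"
    proof (rule pos_uniq[OF T(1) T(1)])
      show "i < length T" "Suc i < length T" using T by auto
      show "snd (T ! i) \<in> arc_edge (T ! i)" by (rule in_arc_edge_snd)
      show "snd (T ! i) \<in> arc_edge (T ! Suc i)" unfolding e by (rule in_arc_edge_fst)
    qed
    then show False by simp
  qed
  show "vert (snd (T ! i)) = vert (fst (T ! Suc i))" by (rule trail_consec[OF trl[OF T(1)] T(2)])
qed

end

lemma pair_mem1: "{a, b} = {c, d} \<Longrightarrow> a = c \<or> a = d"
  by (auto simp: doubleton_eq_iff)
lemma pair_mem2: "{a, b} = {c, d} \<Longrightarrow> b = c \<or> b = d"
  by (auto simp: doubleton_eq_iff)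

theorem mainTheorem5:
  fixes H :: "'h set" and V :: "'v set" and vert :: "'h \<Rightarrow> 'v" and mate :: "'h \<Rightarrow> 'h"
    and \<gamma> :: "'h set \<Rightarrow> bool" and b v :: 'v and h :: 'h
    and B :: "('h arc \<times> nat) set"
  assumes "res_graph H V vert mate b"
    and "four_edge_connected H V vert mate b"
    and "v \<noteq> b"
    and "h \<in> H" and "vert h = v" and "vert (mate h) = b"
    and "flooding_basis H vert mate \<gamma> b B"
  shows "2 * card {R \<in> transitions_at_with H vert v h. works_for H vert mate \<gamma> b R B}
           > card (transitions_at_with H vert v h)"
proof -
  note rg = assms(1) and fec = assms(2) and vb = assms(3) and hH = assms(4) and vh = assms(5)
  have graph: "is_graph H V vert mate" and ev: "\<forall>u\<in>V. even (deg H vert u)" and bV: "b \<in> V"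
    using rg by (auto simp: res_graph_def eulerian_def)
  obtain C where opt: "optimal_flooding H vert mate \<gamma> b C" and sr: "sys_reps \<gamma> C B"
    using assms(7) by (auto simp: flooding_basis_def)
  obtain g where greps: "\<forall>T\<in>C. weight \<gamma> T = 0 \<longrightarrow> is_rep \<gamma> T (g T)"
    and ginj: "inj_on g {T \<in> C. weight \<gamma> T = 0}" and Bdef: "B = g ` {T \<in> C. weight \<gamma> T = 0}"
    using sr by (auto simp: sys_reps_def)
  have flood: "flooding H vert mate b C" using opt by (simp add: optimal_flooding_def)
  interpret F: fo H V vert mate b C \<gamma> g B
    by (unfold_locales) (use graph flood opt greps ginj Bdef in auto)
  have evb: "even (deg H vert b)" using ev bV by blast
  have F1: "\<forall>T\<in>C. \<forall>k. Suc k < length T \<longrightarrow> vert (snd (T ! k)) \<noteq> b"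
    using F.internal_not_b[OF evb] by blast
  have wk: "works_for H vert mate \<gamma> b R B" if "F.good C'" "R \<in> flooding_transitions C'" for C' R
    using that by (auto simp: works_for_def F.good_def)
  define S where "S = {y \<in> H. vert y = v}"
  have finS: "finite S" using F.finH by (simp add: S_def)
  define W where "W y = works_for H vert mate \<gamma> b {h, y} B" for y
  obtain T0 i0 where J0: "T0 \<in> C" "Suc i0 < length T0" "h = snd (T0 ! i0) \<or> h = fst (T0 ! Suc i0)"
    using F.jn_ex[OF hH] vh vb by blast
  define hs where "hs = (if h = snd (T0 ! i0) then fst (T0 ! Suc i0) else snd (T0 ! i0))"
  note jb0 = F.jn_basic[OF J0(1,2)]
  have hs: "{h, hs} = {snd (T0 ! i0), fst (T0 ! Suc i0)}" "hs \<noteq> h" "hs \<in> S"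
    using J0(3) jb0 vh by (auto simp: hs_def S_def)
  have hS: "h \<in> S" using hH vh by (simp add: S_def)
  have good0: "F.good C" using opt sr by (simp add: F.good_def)
  have Whs: "W hs"
  proof -
    have "{snd (T0 ! i0), fst (T0 ! Suc i0)} \<in> trail_transitions T0"
      unfolding trail_transitions_def using J0(2) by blast
    then have "{h, hs} \<in> flooding_transitions C" using hs(1) J0(1) F.ft_mem by metis
    then show ?thesis using wk good0 by (simp add: W_def)
  qed
  define p where "p x = (SOME y. \<exists>T i. T \<in> C \<and> Suc i < length T \<and> {x, y} = {snd (T ! i), fst (T ! Suc i)} \<and> y \<noteq> x)" for x
  have pch: "\<exists>T i. T \<in> C \<and> Suc i < length T \<and> {x, p x} = {snd (T ! i), fst (T ! Suc i)} \<and> p x \<noteq> x"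
    if x: "x \<in> S" for x
  proof -
    have xH: "x \<in> H" "vert x \<noteq> b" using x vb by (auto simp: S_def)
    obtain T i where T: "T \<in> C" "Suc i < length T" "x = snd (T ! i) \<or> x = fst (T ! Suc i)"
      using F.jn_ex[OF xH] by blast
    note jb = F.jn_basic[OF T(1,2)]
    define y where "y = (if x = snd (T ! i) then fst (T ! Suc i) else snd (T ! i))"
    have "{x, y} = {snd (T ! i), fst (T ! Suc i)} \<and> y \<noteq> x" using T(3) jb by (auto simp: y_def)
    then have "\<exists>y T i. T \<in> C \<and> Suc i < length T \<and> {x, y} = {snd (T ! i), fst (T ! Suc i)} \<and> y \<noteq> x"
      using T by blast
    then show ?thesis unfolding p_def by (rule someI_ex[where P = "\<lambda>y. \<exists>T i. T \<in> C \<and> Suc i < length T \<and> {x, y} = {snd (T ! i), fst (T ! Suc i)} \<and> y \<noteq> x", OF exE]) blast+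
  qed
  have pS: "p x \<in> S - {h, hs}" "p (p x) = x" if x: "x \<in> S - {h, hs}" for x
  proof -
    obtain T i where T: "T \<in> C" "Suc i < length T" "{x, p x} = {snd (T ! i), fst (T ! Suc i)}" "p x \<noteq> x"
      using pch x by blast
    note jb = F.jn_basic[OF T(1,2)]
    have px: "p x = snd (T ! i) \<or> p x = fst (T ! Suc i)" "x = snd (T ! i) \<or> x = fst (T ! Suc i)"
      using pair_mem2[OF T(3)] pair_mem1[OF T(3)] by blast+
    have vx: "vert x = v" using x by (simp add: S_def)
    have pH: "p x \<in> H" "vert (p x) = v" using px jb vx by auto
    have pnot: "p x \<notin> {h, hs}"
    proof
      assume "p x \<in> {h, hs}"
      then have "p x = snd (T0 ! i0) \<or> p x = fst (T0 ! Suc i0)" using hs(1) by auto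
      then have "T = T0 \<and> i = i0" using F.jn_uniq[OF T(1,2) J0(1,2) px(1)] by blast
      then have "x \<in> {h, hs}" using T(3) hs(1) by auto
      then show False using x by simp
    qed
    show "p x \<in> S - {h, hs}" using pH pnot by (simp add: S_def)
    then have "p x \<in> S" by simp
    then obtain T' j where T': "T' \<in> C" "Suc j < length T'" "{p x, p (p x)} = {snd (T' ! j), fst (T' ! Suc j)}" "p (p x) \<noteq> p x"
      using pch by blast
    have "p x = snd (T' ! j) \<or> p x = fst (T' ! Suc j)" using pair_mem1[OF T'(3)] .
    then have "T = T' \<and> i = j" using F.jn_uniq[OF T(1,2) T'(1,2) px(1)] by blast
    then have "{p x, p (p x)} = {x, p x}" using T(3) T'(3) by simp
    then show "p (p x) = x" using T'(4) by (auto simp: doubleton_eq_iff)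
  qed
  have main: "W x \<or> W (p x)" if x: "x \<in> S - {h, hs}" for x
  proof -
    obtain T i where T: "T \<in> C" "Suc i < length T" "{x, p x} = {snd (T ! i), fst (T ! Suc i)}" "p x \<noteq> x"
      using pch x by blast
    note jb = F.jn_basic[OF T(1,2)]
    have vx: "vert x = v" using x by (simp add: S_def)
    have vTi: "vert (snd (T ! i)) = v" using pair_mem1[OF T(3)] jb vx by auto
    have vT0: "vert (snd (T0 ! i0)) = v" using J0(3) jb0 vh by auto
    have suff: "W x \<or> W (p x)" if "F.good C'" "y \<in> {snd (T ! i), fst (T ! Suc i)}" "{h, y} \<in> flooding_transitions C'" for C' y
    proof -
      have "y = x \<or> y = p x" using that(2) T(3) by auto
      then show ?thesis using wk[OF that(1,3)] by (auto simp: W_def)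
    qed
    show ?thesis
    proof (cases "T = T0")
      case False
      note s0 = split2[OF J0(2)] and s1 = split2[OF T(2)]
      have vz: "vert (snd (last (take (Suc i) T))) = vert (snd (last (take (Suc i0) T0)))"
        using s0 s1 vTi vT0 by simp
      obtain C' where C': "F.good C'"
        "({snd (last (take (Suc i0) T0)), fst (hd (drop (Suc i) T))} \<in> flooding_transitions C' \<and>
          {snd (last (take (Suc i) T)), fst (hd (drop (Suc i0) T0))} \<in> flooding_transitions C') \<or>
         ({snd (last (take (Suc i0) T0)), snd (last (take (Suc i) T))} \<in> flooding_transitions C' \<and>
          {fst (hd (drop (Suc i) T)), fst (hd (drop (Suc i0) T0))} \<in> flooding_transitions C')"
        using F.caseA[OF J0(1) T(1) False[symmetric] s0(1,2,3) s1(1,2,3) vz] by blast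
      then have C'': "({snd (T0 ! i0), fst (T ! Suc i)} \<in> flooding_transitions C' \<and>
          {snd (T ! i), fst (T0 ! Suc i0)} \<in> flooding_transitions C') \<or>
         ({snd (T0 ! i0), snd (T ! i)} \<in> flooding_transitions C' \<and>
          {fst (T ! Suc i), fst (T0 ! Suc i0)} \<in> flooding_transitions C')"
        using s0 s1 by simp
      show ?thesis
      proof (cases "h = snd (T0 ! i0)")
        case True
        show ?thesis using C''
        proof
          assume "{snd (T0 ! i0), fst (T ! Suc i)} \<in> flooding_transitions C' \<and>
            {snd (T ! i), fst (T0 ! Suc i0)} \<in> flooding_transitions C'"
          then show ?thesis using suff[OF C'(1), of "fst (T ! Suc i)"] True by simp
        next
          assume "{snd (T0 ! i0), snd (T ! i)} \<in> flooding_transitions C' \<and>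
            {fst (T ! Suc i), fst (T0 ! Suc i0)} \<in> flooding_transitions C'"
          then show ?thesis using suff[OF C'(1), of "snd (T ! i)"] True by simp
        qed
      next
        case hF: False
        then have h2: "h = fst (T0 ! Suc i0)" using J0(3) by simp
        show ?thesis using C''
        proof
          assume "{snd (T0 ! i0), fst (T ! Suc i)} \<in> flooding_transitions C' \<and>
            {snd (T ! i), fst (T0 ! Suc i0)} \<in> flooding_transitions C'"
          then have "{h, snd (T ! i)} \<in> flooding_transitions C'" using h2 by (simp add: insert_commute)
          then show ?thesis using suff[OF C'(1), of "snd (T ! i)"] by simp
        next
          assume "{snd (T0 ! i0), snd (T ! i)} \<in> flooding_transitions C' \<and>
            {fst (T ! Suc i), fst (T0 ! Suc i0)} \<in> flooding_transitions C'"
          then have "{h, fst (T ! Suc i)} \<in> flooding_transitions C'" using h2 by (simp add: insert_commute)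
          then show ?thesis using suff[OF C'(1), of "fst (T ! Suc i)"] by simp
        qed
      qed
    next
      case True
      have ii0: "i \<noteq> i0"
      proof
        assume "i = i0"
        then have "{x, p x} = {h, hs}" using T(3) True hs(1) by simp
        then show False using x by auto
      qed
      have arc0: "is_arc H mate (T0 ! k)" if "k < length T0" for k
        using F.arc_in[OF J0(1)] that by simp
      have hpos: "(h = snd (T0 ! i0) \<and> i0 = 0) \<or> (h = fst (T0 ! Suc i0) \<and> Suc (Suc i0) = length T0)"
      proof (cases "h = snd (T0 ! i0)")
        case True
        have "i0 = 0"
        proof (rule ccontr)
          assume "i0 \<noteq> 0"
          then obtain k where k: "i0 = Suc k" by (cases i0) auto
          have "fst (T0 ! i0) = mate h" using arc0[of i0] J0(2) True F.mate_mate by (auto simp: is_arc_def)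
          moreover have "vert (snd (T0 ! k)) = vert (fst (T0 ! i0))"
            using trail_consec[OF F.trl[OF J0(1)], of k] k J0(2) by simp
          moreover have "vert (snd (T0 ! k)) \<noteq> b" using F1 J0 k by simp
          ultimately show False using assms(6) by simp
        qed
        then show ?thesis using True by simp
      next
        case False
        then have h2: "h = fst (T0 ! Suc i0)" using J0(3) by simp
        have "Suc (Suc i0) = length T0"
        proof (rule ccontr)
          assume "Suc (Suc i0) \<noteq> length T0"
          then have k: "Suc (Suc i0) < length T0" using J0(2) by simp
          have "snd (T0 ! Suc i0) = mate h" using arc0[of "Suc i0"] J0(2) h2 by (auto simp: is_arc_def)
          moreover have "vert (snd (T0 ! Suc i0)) \<noteq> b" using F1 J0(1) k by simp
          ultimately show False using assms(6) by simp
        qed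
        then show ?thesis using h2 by simp
      qed
      have T0i: "Suc i < length T0" using T(2) True by simp
      have vTi': "vert (snd (T0 ! i)) = v" using vTi True by simp
      from hpos show ?thesis
      proof
        assume a: "h = snd (T0 ! i0) \<and> i0 = 0"
        then have lt: "i0 < i" using ii0 by simp
        note s3 = split3[OF lt T0i]
        have vPQ: "vert (snd (last (take (Suc i0) T0))) = vert (snd (last (take (i - i0) (drop (Suc i0) T0))))"
          using s3(5,7) vT0 vTi' by simp
        obtain C' where C': "F.good C'"
          "{snd (last (take (Suc i0) T0)), fst (hd (drop (Suc i) T0))} \<in> flooding_transitions C' \<or>
           ({snd (last (take (Suc i0) T0)), snd (last (take (i - i0) (drop (Suc i0) T0)))} \<in> flooding_transitions C' \<and>
            {fst (hd (take (i - i0) (drop (Suc i0) T0))), fst (hd (drop (Suc i) T0))} \<in> flooding_transitions C')"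
          using F.caseB[OF J0(1) s3(1) s3(2,3,4) F1 fec vPQ] by blast
        then have "{h, fst (T0 ! Suc i)} \<in> flooding_transitions C' \<or> {h, snd (T0 ! i)} \<in> flooding_transitions C'"
          using s3(5,6,7,8) a by auto
        then show ?thesis using suff[OF C'(1)] True by auto
      next
        assume a: "h = fst (T0 ! Suc i0) \<and> Suc (Suc i0) = length T0"
        then have lt: "i < i0" using ii0 T0i by simp
        note s3 = split3[OF lt J0(2)]
        have vPQ: "vert (snd (last (take (Suc i) T0))) = vert (snd (last (take (i0 - i) (drop (Suc i) T0))))"
          using s3(5,7) vT0 vTi' by simp
        obtain C' where C': "F.good C'"
          "{snd (last (take (Suc i) T0)), fst (hd (drop (Suc i0) T0))} \<in> flooding_transitions C' \<or>
           ({snd (last (take (Suc i) T0)), snd (last (take (i0 - i) (drop (Suc i) T0)))} \<in> flooding_transitions C' \<and>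
            {fst (hd (take (i0 - i) (drop (Suc i) T0))), fst (hd (drop (Suc i0) T0))} \<in> flooding_transitions C')"
          using F.caseB[OF J0(1) s3(1) s3(2,3,4) F1 fec vPQ] by blast
        then have "{snd (T0 ! i), h} \<in> flooding_transitions C' \<or> {fst (T0 ! Suc i), h} \<in> flooding_transitions C'"
          using s3(5,6,7,8) a by auto
        then have "{h, snd (T0 ! i)} \<in> flooding_transitions C' \<or> {h, fst (T0 ! Suc i)} \<in> flooding_transitions C'"
          by (simp add: insert_commute)
        then show ?thesis using suff[OF C'(1)] True by auto
      qed
    qed
  qed
  define G where "G = {y \<in> S - {h}. W y}"
  have cG: "2 * card G > card S - 1"
  proof (rule count_lemma[OF finS hS hs(3) hs(2)])
    show "G \<subseteq> S - {h}" "hs \<in> G" using Whs hs by (auto simp: G_def)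
    show "\<And>x. x \<in> S - {h, hs} \<Longrightarrow> p x \<in> S - {h, hs}" "\<And>x. x \<in> S - {h, hs} \<Longrightarrow> p (p x) = x"
      using pS by auto
    show "\<And>x. x \<in> S - {h, hs} \<Longrightarrow> x \<in> G \<or> p x \<in> G" using main pS by (auto simp: G_def)
  qed
  have TA: "transitions_at_with H vert v h = (\<lambda>y. {h, y}) ` (S - {h})"
  proof -
    have "{y \<in> H. vert y = v \<and> y \<noteq> h} = S - {h}" by (auto simp: S_def)
    then show ?thesis using trans_at_char[of h H vert v, OF hH vh] by simp
  qed
  have inj: "inj_on (\<lambda>y. {h, y}) (S - {h})"
    using inj_pair[of h] by (rule inj_on_subset) auto
  have c1: "card (transitions_at_with H vert v h) = card S - 1"
    using TA inj finS hS by (simp add: card_image)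
  have "{R \<in> transitions_at_with H vert v h. works_for H vert mate \<gamma> b R B} = (\<lambda>y. {h, y}) ` G"
    unfolding TA G_def W_def by auto
  moreover have "inj_on (\<lambda>y. {h, y}) G" using inj by (rule inj_on_subset) (auto simp: G_def)
  ultimately have c2: "card {R \<in> transitions_at_with H vert v h. works_for H vert mate \<gamma> b R B} = card G"
    by (simp add: card_image)
  show ?thesis using c1 c2 cG by simp
qed

end
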